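(* Let $A\in{\operatorname{\mathsf{TPD}}}_n(\mathbb{S}_{\max}^\vee)$ with $\gamma_i=a_{ii}$ ordered so that $\gamma_1\succeq\cdots\succeq\gamma_n$, and $B_k=\gamma_k I\ominus A$. Assume that $\gamma=\gamma_k$ is simple as an algebraic $\mathbb{S}_{\max}$-eigenvalue of $A$. Let $D^{(k)}$ be the $n\times n$ diagonal matrix with diagonal entries $\gamma_1,\ldots, \gamma_{k-1}, \mathbf{0},\ldots, \mathbf{0}$, let $A^{(k)}$ be the complementary of $D^{(k)}$ in $A$, that is $A^{(k)}$ has entries $[A^{(k)}]_{ij}= a_{ij}$ when $i\neq j$ or $i=j\geq k$, and $\mathbf{0}$ elsewhere, so that $A= D^{(k)}\oplus A^{(k)}$. Then, we have \[ v^{(k)}=(B_k)^\mathrm{adj}_{:,k}= \lambda_k ((\gamma I\ominus D^{(k)})^{-1} A^{(k)})_{:,k}^*\quad \text{with}\; \lambda_k= (\ominus \mathbf{1})^{k-1} \gamma_1\cdots \gamma_{k-1}\gamma ^{n-k} \enspace ,\] and $v^{(k)}$ satisfies $A^{(k)} v^{(k)}=\gamma v^{(k)}\ominus D^{(k)} v^{(k)}$. Moreover, if $v^{(k)}\in (\mathbb{S}_{\max}^\vee)^n$, $v^{(k)}$ is the unique $\mathbb{S}_{\max}$-eigenvector associated to the eigenvalue $\gamma$ (up to a multiplicative factor).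
   Context: $\mathbb{S}_{\max}$ is the symmetrized tropical semiring over a divisible totally ordered abelian group, with zero $\mathbf{0}$, unit $\mathbf{1}$, minus $\ominus$; $\mathbb{S}_{\max}^\vee$ is the set of signed elements; $a\,\nabla\, b$ iff $a\ominus b$ is balanced; $a\preceq b$ iff $b=a\oplus b$. $A\in{\operatorname{\mathsf{TPD}}}_n(\mathbb{S}_{\max}^\vee)$: $A$ symmetric with signed entries, $\mathbf{0}<a_{ii}$ and $a_{ij}^2<a_{ii}a_{jj}$ for $i\ne j$ (where $a<b$ iff $b\ominus a$ is positive). The $\mathbb{S}_{\max}$-eigenvalues of $A$ are its diagonal entries, and $\gamma_k$ is simple iff $\gamma_{k-1}\succ\gamma_k\succ\gamma_{k+1}$ (convention $\gamma_{n+1}=\mathbf{0}$). $(M^{\mathrm{adj}})_{ij}=(\ominus\mathbf{1})^{i+j}\det M[\hat j,\hat i]$ with the signed determinant; $M_{:,j}$ is the $j$-th column; $M^*=\bigoplus_{k\ge0}M^k$ is the Kleene star. An $\mathbb{S}_{\max}$-eigenvector for $\gamma$ is $v\in(\mathbb{S}_{\max}^\vee)^n\setminus\{\mathbf{0}\}$ with $Av\,\nabla\,\gamma v$. *)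

theory Defs
  imports "HOL-Combinatorics.Combinatorics"
begin

text \<open>Elements of S_max: the zero, and for every modulus g of the group a positive
  element (SP), a negative element (SN, i.e. minus the positive one) and a balanced
  element (SB, the balanced element with modulus g).\<close>

datatype sgn = SP | SN | SB

datatype 'g smax = Zero | Nz sgn 'g

definition sadd :: "sgn \<Rightarrow> sgn \<Rightarrow> sgn" where
  "sadd s t = (if s = t then s else SB)"

fun smul :: "sgn \<Rightarrow> sgn \<Rightarrow> sgn" where
  "smul SB t = SB"
| "smul s SB = SB"
| "smul SP t = t"
| "smul SN SP = SN"
| "smul SN SN = SP"

fun sneg :: "sgn \<Rightarrow> sgn" where
  "sneg SP = SN" | "sneg SN = SP" | "sneg SB = SB"

instantiation smax :: (linordered_ab_group_add) comm_semiring_1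
begin

definition zero_smax :: "'a smax" where "zero_smax = Zero"
definition one_smax :: "'a smax" where "one_smax = Nz SP 0"

fun plus_smax :: "'a smax \<Rightarrow> 'a smax \<Rightarrow> 'a smax" where
  "plus_smax Zero y = y"
| "plus_smax x Zero = x"
| "plus_smax (Nz s a) (Nz t b) =
     (if a < b then Nz t b else if b < a then Nz s a else Nz (sadd s t) a)"

fun times_smax :: "'a smax \<Rightarrow> 'a smax \<Rightarrow> 'a smax" where
  "times_smax Zero y = Zero"
| "times_smax x Zero = Zero"
| "times_smax (Nz s a) (Nz t b) = Nz (smul s t) (a + b)"

lemma plus_Zero2[simp]: "(x::'a smax) + Zero = x" by (cases x) auto
lemma times_Zero2[simp]: "(x::'a smax) * Zero = Zero" by (cases x) auto

lemma sadd_ac: "sadd s t = sadd t s" "sadd (sadd s t) u = sadd s (sadd t u)" "sadd s s = s"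
  by (auto simp: sadd_def)

lemma smul_ac: "smul s t = smul t s" "smul (smul s t) u = smul s (smul t u)" "smul SP s = s"
  by (cases s; cases t; cases u; simp)+

lemma smul_SP2[simp]: "smul s SP = s" by (cases s) auto

lemma smul_SB2[simp]: "smul s SB = SB" by (cases s) auto

lemma sadd_smul: "smul (sadd t u) s = sadd (smul t s) (smul u s)"
  by (cases s; cases t; cases u; simp add: sadd_def)

lemma smul_sadd: "smul s (sadd t u) = sadd (smul s t) (smul s u)"
  by (cases s; cases t; cases u; simp add: sadd_def)

instance
proof
  fix a b c :: "'a smax"
  show "a + b + c = a + (b + c)"
    by (cases a; cases b; cases c) (auto simp: sadd_def)
  show "a + b = b + a"
    by (cases a; cases b) (auto simp: sadd_ac)
  show "0 + a = a" by (simp add: zero_smax_def)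
  show "a * b * c = a * (b * c)"
    by (cases a; cases b; cases c) (auto simp: add.assoc smul_ac(2))
  show "a * b = b * a"
    by (cases a; cases b) (auto simp: smul_ac add.commute)
  show "1 * a = a" by (cases a) (auto simp: one_smax_def smul_ac)
  show "(a + b) * c = a * c + b * c"
    by (cases a; cases b; cases c) (auto simp: sadd_smul)
  show "0 * a = 0" by (simp add: zero_smax_def)
  show "a * 0 = 0" by (simp add: zero_smax_def)
  show "(0::'a smax) \<noteq> 1" by (simp add: zero_smax_def one_smax_def)
qed
end


text \<open>Minus (the symmetry): swaps positive and negative elements. Note a - b = a + (-b),
  i.e. the paper's a \<ominus> b; it is NOT a group inverse (a - a is balanced).\<close>

instantiation smax :: (linordered_ab_group_add) uminus
begin
fun uminus_smax :: "'a smax \<Rightarrow> 'a smax" where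
  "uminus_smax Zero = Zero"
| "uminus_smax (Nz s a) = Nz (sneg s) a"
instance ..
end

instantiation smax :: (linordered_ab_group_add) minus
begin
definition minus_smax :: "'a smax \<Rightarrow> 'a smax \<Rightarrow> 'a smax" where
  "minus_smax a b = a + (- b)"
instance ..
end

definition divisible_group :: "'g::linordered_ab_group_add itself \<Rightarrow> bool" where
  "divisible_group _ = (\<forall>x::'g. \<forall>m::nat. 0 < m \<longrightarrow> (\<exists>y. (\<Sum>i<m. y) = x))"

definition balanced :: "'g::linordered_ab_group_add smax \<Rightarrow> bool" where
  "balanced x = (x = 0 \<or> (\<exists>g. x = Nz SB g))"

definition signed :: "'g::linordered_ab_group_add smax \<Rightarrow> bool" where
  "signed x = (\<forall>g. x \<noteq> Nz SB g)"

definition nabla :: "'g::linordered_ab_group_add smax \<Rightarrow> 'g smax \<Rightarrow> bool" (infix "\<nabla>" 50) where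
  "a \<nabla> b = balanced (a - b)"

definition spreceq :: "'g::linordered_ab_group_add smax \<Rightarrow> 'g smax \<Rightarrow> bool" (infix "\<preceq>" 50) where
  "a \<preceq> b = (b = a + b)"

definition ssucc :: "'g::linordered_ab_group_add smax \<Rightarrow> 'g smax \<Rightarrow> bool" (infix "\<succ>" 50) where
  "a \<succ> b = (b \<preceq> a \<and> a \<noteq> b)"

definition spositive :: "'g::linordered_ab_group_add smax \<Rightarrow> bool" where
  "spositive x = (\<exists>g. x = Nz SP g)"

definition slt :: "'g::linordered_ab_group_add smax \<Rightarrow> 'g smax \<Rightarrow> bool" where
  "slt a b = spositive (b - a)"

section \<open>Matrices and vectors (indices 1..n)\<close>

type_synonym 'g smat = "nat \<Rightarrow> nat \<Rightarrow> 'g smax"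
type_synonym 'g svec = "nat \<Rightarrow> 'g smax"

definition idm :: "'g::linordered_ab_group_add smat" where
  "idm = (\<lambda>i j. if i = j then 1 else 0)"

definition mmul :: "nat \<Rightarrow> 'g::linordered_ab_group_add smat \<Rightarrow> 'g smat \<Rightarrow> 'g smat" where
  "mmul n A B = (\<lambda>i j. \<Sum>l=1..n. A i l * B l j)"

definition mvmul :: "nat \<Rightarrow> 'g::linordered_ab_group_add smat \<Rightarrow> 'g svec \<Rightarrow> 'g svec" where
  "mvmul n A v = (\<lambda>i. \<Sum>j=1..n. A i j * v j)"

fun mpow :: "nat \<Rightarrow> 'g::linordered_ab_group_add smat \<Rightarrow> nat \<Rightarrow> 'g smat" where
  "mpow n A 0 = idm"
| "mpow n A (Suc m) = mmul n (mpow n A m) A"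

definition kstar :: "nat \<Rightarrow> 'g::linordered_ab_group_add smat \<Rightarrow> 'g smat" where
  "kstar n M = (\<lambda>i j. THE s. \<exists>N. \<forall>m\<ge>N. (\<Sum>p\<le>m. mpow n M p i j) = s)"

definition mat_inv :: "nat \<Rightarrow> 'g::linordered_ab_group_add smat \<Rightarrow> 'g smat" where
  "mat_inv n M = (THE X. (\<forall>i j. \<not> (i \<in> {1..n} \<and> j \<in> {1..n}) \<longrightarrow> X i j = 0) \<and>
      (\<forall>i\<in>{1..n}. \<forall>j\<in>{1..n}. mmul n M X i j = idm i j \<and> mmul n X M i j = idm i j))"

definition ssign :: "(nat \<Rightarrow> nat) \<Rightarrow> 'g::linordered_ab_group_add smax" where
  "ssign \<sigma> = (if evenperm \<sigma> then 1 else - 1)"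

definition sdet :: "nat \<Rightarrow> 'g::linordered_ab_group_add smat \<Rightarrow> 'g smax" where
  "sdet n M = (\<Sum>\<sigma>\<in>{\<sigma>. \<sigma> permutes {1..n}}. ssign \<sigma> * (\<Prod>i=1..n. M i (\<sigma> i)))"

definition minor :: "nat \<Rightarrow> nat \<Rightarrow> 'g::linordered_ab_group_add smat \<Rightarrow> 'g smat" where
  "minor j i M = (\<lambda>r c. M (if r < j then r else Suc r) (if c < i then c else Suc c))"

definition adj :: "nat \<Rightarrow> 'g::linordered_ab_group_add smat \<Rightarrow> 'g smat" where
  "adj n M = (\<lambda>i j. (- 1) ^ (i + j) * sdet (n - 1) (minor j i M))"

definition TPD :: "nat \<Rightarrow> 'g::linordered_ab_group_add smat \<Rightarrow> bool" where
  "TPD n A = ((\<forall>i\<in>{1..n}. \<forall>j\<in>{1..n}. A i j = A j i \<and> signed (A i j)) \<and>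
     (\<forall>i\<in>{1..n}. slt 0 (A i i)) \<and>
     (\<forall>i\<in>{1..n}. \<forall>j\<in>{1..n}. i \<noteq> j \<longrightarrow> slt ((A i j)^2) (A i i * A j j)))"

definition gam :: "nat \<Rightarrow> 'g::linordered_ab_group_add smat \<Rightarrow> nat \<Rightarrow> 'g smax" where
  "gam n A i = (if i \<le> n then A i i else 0)"

definition simple_eig :: "nat \<Rightarrow> 'g::linordered_ab_group_add smat \<Rightarrow> nat \<Rightarrow> bool" where
  "simple_eig n A k = ((1 < k \<longrightarrow> gam n A (k - 1) \<succ> gam n A k) \<and> gam n A k \<succ> gam n A (Suc k))"

definition eigvec :: "nat \<Rightarrow> 'g::linordered_ab_group_add smat \<Rightarrow> 'g smax \<Rightarrow> 'g svec \<Rightarrow> bool" where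
  "eigvec n A \<gamma> v = ((\<forall>i\<in>{1..n}. signed (v i)) \<and> (\<exists>i\<in>{1..n}. v i \<noteq> 0) \<and>
     (\<forall>i\<in>{1..n}. mvmul n A v i \<nabla> \<gamma> * v i))"

definition Dk :: "'g::linordered_ab_group_add smat \<Rightarrow> nat \<Rightarrow> 'g smat" where
  "Dk A k = (\<lambda>i j. if i = j \<and> i < k then A i i else 0)"

definition Ak :: "'g::linordered_ab_group_add smat \<Rightarrow> nat \<Rightarrow> 'g smat" where
  "Ak A k = (\<lambda>i j. if i \<noteq> j \<or> k \<le> i then A i j else 0)"

end

theory Submission
  imports Defs
begin


lemma smax_zero_Zero: "(0::'g::linordered_ab_group_add smax) = Zero" by (simp add: zero_smax_def)
lemma smax_one_Nz: "(1::'g::linordered_ab_group_add smax) = Nz SP 0" by (simp add: one_smax_def)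

lemma sadd_same[simp]: "sadd s s = s" by (simp add: sadd_def)

lemma smax_idem[simp]: "(x::'g::linordered_ab_group_add smax) + x = x"
  by (cases x) auto

lemmas sz = smax_zero_Zero smax_one_Nz

lemma sneg_sneg[simp]: "sneg (sneg s) = s" by (cases s) auto

lemma uminus_uminus_smax[simp]: "- (- (x::'g::linordered_ab_group_add smax)) = x"
  by (cases x) auto

lemma smul_sneg: "smul (sneg s) t = sneg (smul s t)"
  by (cases s; cases t) auto

lemma smul_sneg2: "smul s (sneg t) = sneg (smul s t)"
  by (cases s; cases t) auto

lemma uminus_mult_smax: "- ((x::'g::linordered_ab_group_add smax) * y) = (- x) * y"
  by (cases x; cases y) (auto simp: smul_sneg)

lemma uminus_mult_smax2: "- ((x::'g::linordered_ab_group_add smax) * y) = x * (- y)"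
  by (cases x; cases y) (auto simp: smul_sneg2)

lemma sneg_sadd: "sneg (sadd s t) = sadd (sneg s) (sneg t)"
  by (cases s; cases t) (auto simp: sadd_def)

lemma uminus_add_smax: "- ((x::'g::linordered_ab_group_add smax) + y) = - x + - y"
  by (cases x; cases y) (auto simp: sneg_sadd)

lemma uminus_zero_smax[simp]: "- (0::'g::linordered_ab_group_add smax) = 0" by (simp add: sz)

lemma uminus_sum_smax: "- (\<Sum>x\<in>X. (f x::'g::linordered_ab_group_add smax)) = (\<Sum>x\<in>X. - f x)"
  by (induction X rule: infinite_finite_induct) (auto simp: uminus_add_smax)

lemma minus_one_mult: "(- 1) * (x::'g::linordered_ab_group_add smax) = - x"
  by (metis uminus_mult_smax mult_1)

lemma minus_one_sq[simp]: "(- 1) * (- 1) = (1::'g::linordered_ab_group_add smax)"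
  by (simp add: sz)

lemma minus_one_pow_sq: "(- 1::'g::linordered_ab_group_add smax) ^ m * (- 1) ^ m = 1"
  by (metis minus_one_sq power_mult_distrib power_one)

fun mo :: "'g::linordered_ab_group_add smax \<Rightarrow> 'g" where
  "mo Zero = 0" | "mo (Nz s a) = a"

lemma mo_mult: "x \<noteq> 0 \<Longrightarrow> y \<noteq> 0 \<Longrightarrow> mo ((x::'g::linordered_ab_group_add smax) * y) = mo x + mo y"
  by (cases x; cases y) (auto simp: sz)

lemma mult_nz: "x \<noteq> 0 \<Longrightarrow> y \<noteq> 0 \<Longrightarrow> ((x::'g::linordered_ab_group_add smax) * y) \<noteq> 0"
  by (cases x; cases y) (auto simp: sz)

lemma mult_eq_0_smax: "((x::'g::linordered_ab_group_add smax) * y) = 0 \<longleftrightarrow> x = 0 \<or> y = 0"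
  by (cases x; cases y) (auto simp: sz)

lemma prod_nz: "finite X \<Longrightarrow> (\<forall>x\<in>X. f x \<noteq> 0) \<Longrightarrow> (\<Prod>x\<in>X. (f x::'g::linordered_ab_group_add smax)) \<noteq> 0
   \<and> mo (\<Prod>x\<in>X. f x) = (\<Sum>x\<in>X. mo (f x))"
proof (induction X rule: finite_induct)
  case (insert x F)
  then show ?case by (simp add: mult_nz mo_mult)
qed (simp add: sz)

lemma prod_zero_smax: "finite X \<Longrightarrow> x \<in> X \<Longrightarrow> f x = 0 \<Longrightarrow> (\<Prod>x\<in>X. (f x::'g::linordered_ab_group_add smax)) = 0"
  by (simp add: prod.remove)

lemma prec_refl[simp]: "(x::'g::linordered_ab_group_add smax) \<preceq> x"
  by (simp add: spreceq_def)

lemma prec_trans: "(x::'g::linordered_ab_group_add smax) \<preceq> y \<Longrightarrow> y \<preceq> z \<Longrightarrow> x \<preceq> z"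
  unfolding spreceq_def by (metis add.assoc)

lemma prec_add: "(x::'g::linordered_ab_group_add smax) \<preceq> x + y"
  unfolding spreceq_def by (metis add.assoc add.commute smax_idem)

lemma prec_add2: "(x::'g::linordered_ab_group_add smax) \<preceq> y + x"
  by (metis prec_add add.commute)

lemma prec_lub: "(x::'g::linordered_ab_group_add smax) \<preceq> z \<Longrightarrow> y \<preceq> z \<Longrightarrow> x + y \<preceq> z"
  unfolding spreceq_def by (metis add.assoc)

lemma prec_mult: "(x::'g::linordered_ab_group_add smax) \<preceq> y \<Longrightarrow> x * z \<preceq> y * z"
  unfolding spreceq_def by (metis distrib_right)

lemma prec_zero[simp]: "0 \<preceq> (x::'g::linordered_ab_group_add smax)"
  unfolding spreceq_def by (simp add: sz)

lemma prec_lt: "a < b \<Longrightarrow> Nz s a \<preceq> (Nz t (b::'g::linordered_ab_group_add))"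
  unfolding spreceq_def by auto

lemma prec_mo: "x = 0 \<or> (x \<noteq> 0 \<and> y \<noteq> 0 \<and> mo x < mo y) \<Longrightarrow> (x::'g::linordered_ab_group_add smax) \<preceq> y"
  by (cases x; cases y) (auto simp: prec_lt sz[symmetric])

lemma prec_sum: "finite X \<Longrightarrow> \<forall>x\<in>X. f x \<preceq> z \<Longrightarrow> (\<Sum>x\<in>X. (f x::'g::linordered_ab_group_add smax)) \<preceq> z"
proof (induction X rule: finite_induct)
  case (insert a F)
  then show ?case by (simp add: prec_lub)
qed simp

lemma prec_mem_sum: "finite X \<Longrightarrow> x \<in> X \<Longrightarrow> f x \<preceq> (\<Sum>x\<in>X. (f x::'g::linordered_ab_group_add smax))"
proof (induction X rule: finite_induct)
  case (insert a F)
  show ?case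
  proof (cases "x = a")
    case True
    then show ?thesis using insert by (simp add: prec_add)
  next
    case False
    then have "f x \<preceq> sum f F" using insert by simp
    then show ?thesis using insert(1,2) prec_add2[of "sum f F" "f a"] by (simp add: prec_trans[of "f x"])
  qed
qed simp

lemma sum_dominated:
  assumes "finite S" "T \<subseteq> S" "\<forall>s\<in>S. \<exists>t\<in>T. f s \<preceq> f t"
  shows "(\<Sum>x\<in>S. (f x::'g::linordered_ab_group_add smax)) = (\<Sum>x\<in>T. f x)"
proof -
  have fT: "finite T" using assms finite_subset by blast
  have "(\<Sum>x\<in>S. f x) = (\<Sum>x\<in>T. f x) + (\<Sum>x\<in>S-T. f x)"
    using sum.subset_diff[OF assms(2,1), of f] by (simp add: add.commute)
  moreover have "(\<Sum>x\<in>S-T. f x) \<preceq> (\<Sum>x\<in>T. f x)"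
  proof (rule prec_sum)
    show "finite (S - T)" using assms by simp
    show "\<forall>x\<in>S - T. f x \<preceq> sum f T"
    proof
      fix x assume "x \<in> S - T"
      then obtain t where "t \<in> T" "f x \<preceq> f t" using assms by blast
      then show "f x \<preceq> sum f T" using prec_mem_sum[OF fT, of t f] by (rule_tac prec_trans)
    qed
  qed
  ultimately show ?thesis unfolding spreceq_def by (metis add.commute)
qed



lemma two_lt: "(a::'g::linordered_ab_group_add) + a < b + b \<Longrightarrow> a < b"
  by (meson add_mono not_less)

locale tp =
  fixes n :: nat and A :: "'g::linordered_ab_group_add smat" and k :: nat
  assumes tpd: "TPD n A"
    and srt: "\<forall>i. 1 \<le> i \<and> i < n \<longrightarrow> A (Suc i) (Suc i) \<preceq> A i i"
    and kin: "k \<in> {1..n}"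
    and simp_eig: "simple_eig n A k"
begin

definition d :: "nat \<Rightarrow> 'g" where "d i = mo (A i i)"
definition g :: "'g" where "g = d k"
definition f :: "nat \<Rightarrow> 'g" where "f i = (if i < k then d i else g)"

lemma diag: "i \<in> {1..n} \<Longrightarrow> A i i = Nz SP (d i)"
proof -
  assume i: "i \<in> {1..n}"
  then have "slt 0 (A i i)" using tpd unfolding TPD_def by blast
  then have "spositive (A i i)" unfolding slt_def minus_smax_def by (simp add: sz)
  then show ?thesis unfolding spositive_def d_def by auto
qed

lemma symA: "i \<in> {1..n} \<Longrightarrow> j \<in> {1..n} \<Longrightarrow> A i j = A j i"
  using tpd unfolding TPD_def by blast

lemma signedA: "i \<in> {1..n} \<Longrightarrow> j \<in> {1..n} \<Longrightarrow> signed (A i j)"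
  using tpd unfolding TPD_def by blast

lemma offA: 
  assumes "i \<in> {1..n}" "j \<in> {1..n}" "i \<noteq> j" "A i j \<noteq> 0"
  shows "mo (A i j) + mo (A i j) < d i + d j"
proof -
  have "slt ((A i j)^2) (A i i * A j j)" using tpd assms unfolding TPD_def by blast
  moreover obtain s a where Aij: "A i j = Nz s a" using assms(4) by (cases "A i j") (auto simp: sz)
  moreover have "s \<noteq> SB" using signedA[OF assms(1,2)] Aij unfolding signed_def by auto
  ultimately have "spositive (Nz SP (d i + d j) + - Nz SP (a + a))"
    using diag[OF assms(1)] diag[OF assms(2)] unfolding slt_def minus_smax_def power2_eq_square
    by (cases s) auto
  then show ?thesis using Aij by (auto simp: spositive_def sadd_def split: if_splits)
qed

lemma prec_pos: "Nz SP a \<preceq> Nz SP b \<longleftrightarrow> a \<le> (b::'g)"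
  unfolding spreceq_def by auto

lemma succ_pos: "Nz SP a \<succ> Nz SP b \<longleftrightarrow> b < (a::'g)"
  unfolding ssucc_def spreceq_def by auto

lemma d_step: "1 \<le> i \<Longrightarrow> i < n \<Longrightarrow> d (Suc i) \<le> d i"
proof -
  assume "1 \<le> i" "i < n"
  then have "A (Suc i) (Suc i) \<preceq> A i i" using srt by blast
  then show ?thesis using diag[of i] diag[of "Suc i"] \<open>1 \<le> i\<close> \<open>i < n\<close> by (simp add: prec_pos)
qed

lemma d_mono: assumes "1 \<le> i" "i \<le> j" "j \<le> n" shows "d j \<le> d i"
  using assms(2,3)
proof (induction j rule: dec_induct)
  case (step m)
  then show ?case using d_step[of m] assms(1) by simp
qed simp

lemma d_before: "1 \<le> i \<Longrightarrow> i < k \<Longrightarrow> g < d i"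
proof -
  assume i: "1 \<le> i" "i < k"
  then have "1 < k" by simp
  then have "gam n A (k - 1) \<succ> gam n A k" using simp_eig unfolding simple_eig_def by blast
  moreover have "k - 1 \<in> {1..n}" using i kin by auto
  ultimately have "g < d (k - 1)" using kin diag[of k] diag[of "k - 1"] i
    by (simp add: gam_def succ_pos g_def)
  moreover have "d (k - 1) \<le> d i" using d_mono[of i "k - 1"] i kin by simp
  ultimately show ?thesis by simp
qed

lemma d_after: "k < i \<Longrightarrow> i \<le> n \<Longrightarrow> d i < g"
proof -
  assume i: "k < i" "i \<le> n"
  then have "gam n A k \<succ> gam n A (Suc k)" using simp_eig unfolding simple_eig_def by blast
  then have "d (Suc k) < g" using kin diag[of k] diag[of "Suc k"] i
    by (simp add: gam_def succ_pos g_def)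
  moreover have "d i \<le> d (Suc k)" using d_mono[of "Suc k" i] i kin by simp
  ultimately show ?thesis by simp
qed

lemma d_le_f: "i \<in> {1..n} \<Longrightarrow> d i \<le> f i"
  using d_after[of i] unfolding f_def g_def by (cases "k < i") auto

end



context tp begin

definition gm :: "'g smax" where "gm = A k k"
definition B :: "'g smat" where "B = (\<lambda>i j. gm * idm i j - A i j)"
definition eps :: "nat \<Rightarrow> 'g smax" where "eps i = (if i < k then Nz SN (- d i) else Nz SP (- g))"
definition M :: "'g smat" where "M = (\<lambda>i j. eps i * Ak A k i j)"

lemma gm_eq: "gm = Nz SP g"
  using diag[of k] kin unfolding gm_def g_def by simp

lemma B_off: "i \<noteq> j \<Longrightarrow> B i j = - A i j"
  unfolding B_def idm_def minus_smax_def by (simp add: sz)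

lemma B_lt: "i \<in> {1..n} \<Longrightarrow> i < k \<Longrightarrow> B i i = Nz SN (d i)"
  using d_before[of i] diag[of i] unfolding B_def idm_def minus_smax_def gm_eq by (auto simp: sz)

lemma B_gt: "i \<in> {1..n} \<Longrightarrow> k < i \<Longrightarrow> B i i = Nz SP g"
  using d_after[of i] diag[of i] unfolding B_def idm_def minus_smax_def gm_eq by (auto simp: sz)

lemma B_diag: "i \<in> {1..n} \<Longrightarrow> i \<noteq> k \<Longrightarrow> B i i \<noteq> 0 \<and> mo (B i i) = f i \<and> eps i * B i i = 1 \<and> signed (B i i)"
  using B_lt[of i] B_gt[of i] unfolding f_def eps_def signed_def
  by (cases "i < k") (auto simp: sz)

lemma mo_eps: "mo (eps i) = - f i" unfolding eps_def f_def by auto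
lemma eps_nz: "eps i \<noteq> 0" unfolding eps_def by (auto simp: sz)

lemma edge:
  assumes "i \<in> {1..n}" "j \<in> {1..n}" "M i j \<noteq> 0"
  shows "mo (M i j) + mo (M i j) + f i < f j \<or> (i = k \<and> j = k \<and> M i j = 1)"
proof (cases "i = j")
  case True
  then have ik: "k \<le> i" and Mii: "M i i = eps i * A i i"
    using assms(3) unfolding M_def Ak_def by (auto simp: sz split: if_splits)
  show ?thesis
  proof (cases "i = k")
    case True
    then show ?thesis using Mii \<open>i = j\<close> diag[OF assms(1)] unfolding eps_def g_def by (simp add: sz)
  next
    case False
    then have "d i < g" using d_after[of i] ik assms(1) by auto
    then show ?thesis using Mii \<open>i = j\<close> diag[OF assms(1)] ik False unfolding eps_def f_def
      by (simp add: algebra_simps add_strict_mono)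
  qed
next
  case False
  then have Mij: "M i j = eps i * A i j" unfolding M_def Ak_def by simp
  then have Anz: "A i j \<noteq> 0" using assms(3) by (auto simp: sz)
  have "mo (M i j) = mo (A i j) - f i" using Mij Anz eps_nz by (simp add: mo_mult mo_eps)
  then have "mo (M i j) + mo (M i j) + f i = mo (A i j) + mo (A i j) - f i"
    by (metis (no_types, lifting) add_diff_eq diff_add_eq diff_add_cancel)
  also have "\<dots> < d i + d j - f i" using offA[OF assms(1,2) False Anz] by simp
  also have "\<dots> \<le> f j" using d_le_f[OF assms(1)] d_le_f[OF assms(2)] by (simp add: algebra_simps add_mono)
  finally show ?thesis by simp
qed

lemma M_diag_small: "i \<in> {1..n} \<Longrightarrow> i \<noteq> k \<Longrightarrow> M i i = 0 \<or> (M i i \<noteq> 0 \<and> mo (M i i) < 0)"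
proof -
  assume i: "i \<in> {1..n}" "i \<noteq> k"
  show ?thesis
  proof (cases "M i i = 0")
    case False
    then have "mo (M i i) + mo (M i i) < 0 + 0" using edge[OF i(1) i(1)] i by auto
    then show ?thesis using False two_lt by blast
  qed simp
qed

lemma M_kk: "M k k = 1"
  using diag[of k] kin unfolding M_def Ak_def eps_def g_def by (simp add: sz)

end


fun wtm :: "'g::linordered_ab_group_add smat \<Rightarrow> nat list \<Rightarrow> 'g smax" where
  "wtm X [] = 1"
| "wtm X [x] = 1"
| "wtm X (x # y # zs) = X x y * wtm X (y # zs)"

lemma wtm_append: "wtm X (xs @ y # ys) = wtm X (xs @ [y]) * wtm X (y # ys)"
proof (induction xs)
  case (Cons a xs)
  then show ?case by (cases xs) (auto simp: mult.assoc)
qed simp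

lemma wtm_snoc: "xs \<noteq> [] \<Longrightarrow> wtm X (xs @ [y]) = wtm X xs * X (last xs) y"
proof (induction xs)
  case (Cons a xs)
  then show ?case by (cases xs) (auto simp: mult.assoc)
qed simp

definition walks :: "nat \<Rightarrow> nat \<Rightarrow> nat \<Rightarrow> nat \<Rightarrow> nat list set" where
  "walks n p i j = {w. length w = Suc p \<and> hd w = i \<and> last w = j \<and> set w \<subseteq> {1..n}}"

lemma finite_walks: "finite (walks n p i j)"
proof -
  have "walks n p i j \<subseteq> {w. set w \<subseteq> {1..n} \<and> length w = Suc p}" unfolding walks_def by auto
  then show ?thesis using finite_lists_length_eq[of "{1..n}" "Suc p"] finite_subset by blast
qed

lemma walks_0: "walks n 0 i j = (if i = j \<and> i \<in> {1..n} then {[i]} else {})"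
  unfolding walks_def by (auto simp: length_Suc_conv)

lemma walks_Suc: 
  assumes "j \<in> {1..n}"
  shows "walks n (Suc p) i j = (\<lambda>w. w @ [j]) ` (\<Union>l\<in>{1..n}. walks n p i l)"
proof (intro set_eqI iffI)
  fix w assume w: "w \<in> walks n (Suc p) i j"
  define u where "u = butlast w"
  have wne: "w \<noteq> []" using w unfolding walks_def by auto
  have lw: "last w = j" using w unfolding walks_def by simp
  have u1: "w = u @ [j]" unfolding u_def using append_butlast_last_id[OF wne] lw by simp
  have lu: "length u = Suc p" using w unfolding walks_def u_def by simp
  then have une: "u \<noteq> []" by auto
  have hu: "hd u = i" using w u1 une unfolding walks_def by simp
  have su: "set u \<subseteq> {1..n}" using w u1 unfolding walks_def by auto
  have "u \<in> walks n p i (last u)" using lu hu su unfolding walks_def by simp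
  moreover have "last u \<in> {1..n}" using su une last_in_set by blast
  ultimately show "w \<in> (\<lambda>w. w @ [j]) ` (\<Union>l\<in>{1..n}. walks n p i l)" using u1 by blast
next
  fix w assume "w \<in> (\<lambda>w. w @ [j]) ` (\<Union>l\<in>{1..n}. walks n p i l)"
  then obtain u l where u: "w = u @ [j]" "l \<in> {1..n}" "u \<in> walks n p i l" by blast
  then have "u \<noteq> []" unfolding walks_def by auto
  then show "w \<in> walks n (Suc p) i j" using assms u unfolding walks_def
    by (simp add: hd_append)
qed

lemma mpow_walks:
  assumes "i \<in> {1..n}" "j \<in> {1..n}"
  shows "mpow n X p i j = (\<Sum>w\<in>walks n p i j. wtm X w)"
  using assms(2)
proof (induction p arbitrary: j)
  case 0
  then show ?case using assms(1) by (simp add: walks_0 idm_def)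
next
  case (Suc p)
  have "mpow n X (Suc p) i j = (\<Sum>l=1..n. mpow n X p i l * X l j)"
    by (simp add: mmul_def)
  also have "\<dots> = (\<Sum>l=1..n. (\<Sum>w\<in>walks n p i l. wtm X (w @ [j])))"
  proof (rule sum.cong[OF refl])
    fix l assume l: "l \<in> {1..n}"
    have "mpow n X p i l * X l j = (\<Sum>w\<in>walks n p i l. wtm X w * X l j)"
      using Suc.IH[OF l] by (simp add: sum_distrib_right)
    also have "\<dots> = (\<Sum>w\<in>walks n p i l. wtm X (w @ [j]))"
      by (rule sum.cong[OF refl]) (subst wtm_snoc, auto simp: walks_def)
    finally show "mpow n X p i l * X l j = (\<Sum>w\<in>walks n p i l. wtm X (w @ [j]))" .
  qed
  also have "\<dots> = (\<Sum>w\<in>(\<Union>l\<in>{1..n}. walks n p i l). wtm X (w @ [j]))"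
    apply (rule sum.UNION_disjoint[symmetric])
      apply simp
     apply (simp add: finite_walks)
    apply (auto simp: walks_def)
    done
  also have "\<dots> = (\<Sum>w\<in>walks n (Suc p) i j. wtm X w)"
    unfolding walks_Suc[OF Suc.prems] by (rule sum.reindex[symmetric, unfolded comp_def]) (auto intro: inj_onI)
  finally show ?case .
qed



lemma wtm_cong: "set w \<subseteq> {1..n} \<Longrightarrow> \<forall>a\<in>{1..n}. \<forall>b\<in>{1..n}. X a b = Y a b \<Longrightarrow> wtm X w = wtm Y w"
proof (induction X w rule: wtm.induct)
  case (3 X x y zs)
  then show ?case by simp
qed auto

lemma arith1: "(a::'g::linordered_ab_group_add) + a + x < y \<Longrightarrow> b + b + y < z \<Longrightarrow> (a + b) + (a + b) + x < z"
proof -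
  assume h: "a + a + x < y" "b + b + y < z"
  have "(a + b) + (a + b) + x = (a + a + x) + (b + b)" by (simp add: algebra_simps)
  also have "\<dots> < y + (b + b)" using h(1) by simp
  also have "\<dots> = b + b + y" by (simp add: algebra_simps)
  also have "\<dots> < z" by (rule h(2))
  finally show ?thesis .
qed

context tp begin

definition EP :: "nat \<Rightarrow> nat list set" where
  "EP i = {P. distinct P \<and> P \<noteq> [] \<and> hd P = i \<and> last P = k \<and> set P \<subseteq> {1..n}}"

definition R :: "nat \<Rightarrow> 'g smax" where
  "R i = (\<Sum>P\<in>EP i. wtm M P)"

lemma finite_EP: "finite (EP i)"
proof -
  have "EP i \<subseteq> {w. set w \<subseteq> {1..n} \<and> length w \<le> n}"
  proof
    fix P assume "P \<in> EP i"
    then have P: "distinct P" "set P \<subseteq> {1..n}" unfolding EP_def by auto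
    then have "card (set P) \<le> card {1..n}" by (intro card_mono) auto
    then show "P \<in> {w. set w \<subseteq> {1..n} \<and> length w \<le> n}" using P distinct_card[OF P(1)] by simp
  qed
  then show ?thesis using finite_lists_length_le[of "{1..n}" n] finite_subset by blast
qed

lemma walk_bound:
  "xs \<noteq> [] \<Longrightarrow> set xs \<subseteq> {1..n} \<Longrightarrow>
   wtm M xs = 0 \<or> (wtm M xs \<noteq> 0 \<and> mo (wtm M xs) + mo (wtm M xs) + f (hd xs) < f (last xs))
   \<or> (wtm M xs = 1 \<and> hd xs = last xs)"
proof (induction xs rule: induct_list012)
  case (3 x y zs)
  let ?w = "wtm M (y # zs)"
  have xy: "x \<in> {1..n}" "y \<in> {1..n}" using "3.prems" by auto
  have IH: "?w = 0 \<or> (?w \<noteq> 0 \<and> mo ?w + mo ?w + f y < f (last (y # zs))) \<or> (?w = 1 \<and> y = last (y # zs))"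
    using "3.IH"(2) "3.prems" by simp
  show ?case
  proof (cases "M x y = 0 \<or> ?w = 0")
    case True
    then show ?thesis by (auto simp: sz)
  next
    case False
    then have nz: "M x y \<noteq> 0" "?w \<noteq> 0" by auto
    have e: "mo (M x y) + mo (M x y) + f x < f y \<or> (x = k \<and> y = k \<and> M x y = 1)"
      using edge[OF xy nz(1)] .
    have wxy: "wtm M (x # y # zs) = M x y * ?w" by simp
    have nz2: "wtm M (x # y # zs) \<noteq> 0" using nz wxy mult_nz by metis
    have mo2: "mo (wtm M (x # y # zs)) = mo (M x y) + mo ?w" using nz wxy mo_mult by metis
    from e show ?thesis
    proof
      assume e1: "mo (M x y) + mo (M x y) + f x < f y"
      from IH nz show ?thesis
      proof (elim disjE)
        assume "?w \<noteq> 0 \<and> mo ?w + mo ?w + f y < f (last (y # zs))"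
        then have "mo (wtm M (x # y # zs)) + mo (wtm M (x # y # zs)) + f x < f (last (y # zs))"
          using arith1[OF e1] mo2 by metis
        then show ?thesis using nz2 by simp
      next
        assume "?w = 1 \<and> y = last (y # zs)"
        then show ?thesis using e1 mo2 nz2 by (simp add: sz)
      qed simp
    next
      assume e2: "x = k \<and> y = k \<and> M x y = 1"
      then have "M x y = 1" by blast
      then have "wtm M (x # y # zs) = ?w" using wxy by simp
      then show ?thesis using IH e2 by auto
    qed
  qed
qed (auto simp: sz)

lemma closed_walk: "xs \<noteq> [] \<Longrightarrow> set xs \<subseteq> {1..n} \<Longrightarrow> hd xs = last xs \<Longrightarrow> wtm M xs \<preceq> 1"
proof -
  assume h: "xs \<noteq> []" "set xs \<subseteq> {1..n}" "hd xs = last xs"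
  let ?w = "wtm M xs"
  from walk_bound[OF h(1,2)] show ?thesis
  proof (elim disjE)
    assume a: "?w \<noteq> 0 \<and> mo ?w + mo ?w + f (hd xs) < f (last xs)"
    then have "mo ?w + mo ?w < 0 + 0" using h(3) by simp
    then have "mo ?w < 0" using two_lt by blast
    then show ?thesis using a by (intro prec_mo) (auto simp: sz)
  qed auto
qed

lemma dominate_walk:
  "w \<noteq> [] \<Longrightarrow> hd w = i \<Longrightarrow> last w = k \<Longrightarrow> set w \<subseteq> {1..n} \<Longrightarrow> \<exists>P\<in>EP i. wtm M w \<preceq> wtm M P"
proof (induction "length w" arbitrary: w rule: less_induct)
  case less
  show ?case
  proof (cases "distinct w")
    case True
    then have "w \<in> EP i" using less.prems unfolding EP_def by auto
    then show ?thesis by (rule bexI[rotated]) simp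
  next
    case False
    then obtain xs y ys zs where w: "w = xs @ [y] @ ys @ [y] @ zs"
      using not_distinct_decomp by blast
    define w' where "w' = xs @ [y] @ zs"
    define c where "c = y # ys @ [y]"
    have "wtm M w = wtm M (xs @ [y]) * wtm M (y # ys @ y # zs)"
      using w wtm_append[of M xs y "ys @ y # zs"] by simp
    also have "wtm M (y # ys @ y # zs) = wtm M c * wtm M (y # zs)"
      using wtm_append[of M "y # ys" y zs] unfolding c_def by simp
    finally have ww: "wtm M w = wtm M w' * wtm M c"
      unfolding w'_def using wtm_append[of M xs y zs] by (simp add: ac_simps)
    have "wtm M c \<preceq> 1" using less.prems w unfolding c_def
      by (intro closed_walk) auto
    then have "wtm M w \<preceq> wtm M w'" using prec_mult[of "wtm M c" 1 "wtm M w'"] ww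
      by (simp add: mult.commute)
    moreover have "length w' < length w" using w unfolding w'_def by simp
    moreover have "w' \<noteq> []" "hd w' = i" "last w' = k" "set w' \<subseteq> {1..n}"
      using less.prems w unfolding w'_def by (auto simp: hd_append)
    ultimately obtain P where "P \<in> EP i" "wtm M w' \<preceq> wtm M P" using less.hyps by blast
    then show ?thesis using prec_trans[OF \<open>wtm M w \<preceq> wtm M w'\<close>] by auto
  qed
qed

end


lemma distinct_hd_last: "distinct P \<Longrightarrow> P \<noteq> [] \<Longrightarrow> hd P = last P \<Longrightarrow> P = [hd P]"
proof (cases P)
  case (Cons x xs)
  assume h: "distinct P" "hd P = last P"
  show ?thesis
  proof (cases xs)
    case (Cons y ys)
    then have "last P \<in> set xs" using \<open>P = x # xs\<close> by simp
    then show ?thesis using h \<open>P = x # xs\<close> by simp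
  qed (use \<open>P = x # xs\<close> in simp)
qed simp

context tp begin

lemma EP_k: "EP k = {[k]}"
proof
  show "EP k \<subseteq> {[k]}"
  proof
    fix P assume "P \<in> EP k"
    then have "distinct P" "P \<noteq> []" "hd P = k" "last P = k" unfolding EP_def by auto
    then show "P \<in> {[k]}" using distinct_hd_last[of P] by simp
  qed
  show "{[k]} \<subseteq> EP k" using kin unfolding EP_def by auto
qed

lemma R_k: "R k = 1"
  unfolding R_def EP_k by simp

lemma walkset_sum:
  assumes "finite W" "EP i \<subseteq> W" "\<forall>w\<in>W. w \<noteq> [] \<and> hd w = i \<and> last w = k \<and> set w \<subseteq> {1..n}"
  shows "(\<Sum>w\<in>W. wtm M w) = R i"
  unfolding R_def
proof (rule sum_dominated[OF assms(1,2)])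
  show "\<forall>s\<in>W. \<exists>t\<in>EP i. wtm M s \<preceq> wtm M t"
    using assms(3) dominate_walk by blast
qed

definition WL :: "nat \<Rightarrow> nat \<Rightarrow> nat list set" where
  "WL m i = (\<Union>p\<in>{..m}. walks n p i k)"

lemma sum_mpow:
  assumes "i \<in> {1..n}" "\<forall>a\<in>{1..n}. \<forall>b\<in>{1..n}. X a b = M a b"
  shows "(\<Sum>p\<le>m. mpow n X p i k) = (\<Sum>w\<in>WL m i. wtm M w)"
proof -
  have "(\<Sum>p\<le>m. mpow n X p i k) = (\<Sum>p\<le>m. \<Sum>w\<in>walks n p i k. wtm M w)"
  proof (rule sum.cong[OF refl])
    fix p
    show "mpow n X p i k = (\<Sum>w\<in>walks n p i k. wtm M w)"
      using mpow_walks[OF assms(1), of k X p] kin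
      by (simp add: walks_def wtm_cong[OF _ assms(2)])
  qed
  also have "\<dots> = (\<Sum>w\<in>WL m i. wtm M w)"
    unfolding WL_def
    apply (rule sum.UNION_disjoint[symmetric])
      apply simp
     apply (simp add: finite_walks)
    apply (auto simp: walks_def)
    done
  finally show ?thesis .
qed

lemma finite_WL: "finite (WL m i)"
  unfolding WL_def by (simp add: finite_walks)

lemma sum_WL:
  assumes "n \<le> m"
  shows "(\<Sum>w\<in>WL m i. wtm M w) = R i"
proof (rule walkset_sum[OF finite_WL])
  show "EP i \<subseteq> WL m i"
  proof
    fix P assume P: "P \<in> EP i"
    then have "length P \<le> n"
      using finite_EP unfolding EP_def
      by (metis (mono_tags, lifting) card_atLeastAtMost card_mono diff_Suc_1 distinct_card finite_atLeastAtMost mem_Collect_eq)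
    moreover have "P \<noteq> []" using P unfolding EP_def by auto
    ultimately have "P \<in> walks n (length P - 1) i k" "length P - 1 \<in> {..m}"
      using P assms unfolding EP_def walks_def by auto
    then show "P \<in> WL m i" unfolding WL_def by blast
  qed
  show "\<forall>w\<in>WL m i. w \<noteq> [] \<and> hd w = i \<and> last w = k \<and> set w \<subseteq> {1..n}"
    unfolding WL_def walks_def by auto
qed

lemma kstar_R:
  assumes "i \<in> {1..n}" "\<forall>a\<in>{1..n}. \<forall>b\<in>{1..n}. X a b = M a b"
  shows "kstar n X i k = R i"
proof -
  have S: "\<And>m. n \<le> m \<Longrightarrow> (\<Sum>p\<le>m. mpow n X p i k) = R i"
    using sum_mpow[OF assms] sum_WL by simp
  show ?thesis
    unfolding kstar_def
  proof (rule the_equality)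
    show "\<exists>N. \<forall>m\<ge>N. (\<Sum>p\<le>m. mpow n X p i k) = R i" using S by blast
    fix s assume "\<exists>N. \<forall>m\<ge>N. (\<Sum>p\<le>m. mpow n X p i k) = s"
    then obtain N where N: "\<forall>m\<ge>N. (\<Sum>p\<le>m. mpow n X p i k) = s" by blast
    have "(\<Sum>p\<le>max N n. mpow n X p i k) = s" using N by simp
    moreover have "(\<Sum>p\<le>max N n. mpow n X p i k) = R i" using S by simp
    ultimately show "s = R i" by simp
  qed
qed

lemma R_fix:
  assumes i: "i \<in> {1..n}"
  shows "(\<Sum>j=1..n. M i j * R j) = R i"
proof -
  have "(\<Sum>j=1..n. M i j * R j) = (\<Sum>j=1..n. \<Sum>P\<in>EP j. wtm M (i # P))"
  proof (rule sum.cong[OF refl])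
    fix j assume j: "j \<in> {1..n}"
    have "M i j * R j = (\<Sum>P\<in>EP j. M i j * wtm M P)" unfolding R_def by (simp add: sum_distrib_left)
    also have "\<dots> = (\<Sum>P\<in>EP j. wtm M (i # P))"
    proof (rule sum.cong[OF refl])
      fix P assume "P \<in> EP j"
      then obtain y ys where "P = y # ys" "y = j" unfolding EP_def by (cases P) auto
      then show "M i j * wtm M P = wtm M (i # P)" by simp
    qed
    finally show "M i j * R j = (\<Sum>P\<in>EP j. wtm M (i # P))" .
  qed
  also have "\<dots> = (\<Sum>P\<in>(\<Union>j\<in>{1..n}. EP j). wtm M (i # P))"
    apply (rule sum.UNION_disjoint[symmetric])
      apply simp
     apply (simp add: finite_EP)
    apply (auto simp: EP_def)
    done
  also have "\<dots> = (\<Sum>w\<in>Cons i ` (\<Union>j\<in>{1..n}. EP j). wtm M w)"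
    by (rule sum.reindex[symmetric, unfolded comp_def]) (auto intro: inj_onI)
  finally have eq: "(\<Sum>j=1..n. M i j * R j) = (\<Sum>w\<in>Cons i ` (\<Union>j\<in>{1..n}. EP j). wtm M w)" .
  define W where "W = Cons i ` (\<Union>j\<in>{1..n}. EP j)"
  have fW: "finite W" unfolding W_def by (simp add: finite_EP)
  have Wwalk: "\<forall>w\<in>W. w \<noteq> [] \<and> hd w = i \<and> last w = k \<and> set w \<subseteq> {1..n}"
    using i unfolding W_def EP_def by auto
  show ?thesis
  proof (cases "i = k")
    case False
    have "EP i \<subseteq> W"
    proof
      fix P assume P: "P \<in> EP i"
      then obtain ys where Pc: "P = i # ys" unfolding EP_def by (cases P) auto
      have "ys \<noteq> []" using P Pc False unfolding EP_def by auto
      have "ys \<in> EP (hd ys)" using P Pc \<open>ys \<noteq> []\<close> unfolding EP_def by auto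
      moreover have "hd ys \<in> {1..n}" using P Pc hd_in_set[OF \<open>ys \<noteq> []\<close>] unfolding EP_def by auto
      ultimately show "P \<in> W" unfolding W_def Pc by blast
    qed
    then show ?thesis using eq walkset_sum[OF fW _ Wwalk] unfolding W_def by simp
  next
    case True
    have "[k] \<in> (\<Union>j\<in>{1..n}. EP j)" using kin EP_k by blast
    then have kk: "[k, k] \<in> W" using True unfolding W_def by blast
    have "(\<Sum>w\<in>W. wtm M w) = (\<Sum>w\<in>{[k,k]}. wtm M w)"
    proof (rule sum_dominated[OF fW])
      show "{[k, k]} \<subseteq> W" using kk by simp
      show "\<forall>s\<in>W. \<exists>t\<in>{[k, k]}. wtm M s \<preceq> wtm M t"
      proof
        fix s assume "s \<in> W"
        then obtain P where "P \<in> EP k" "wtm M s \<preceq> wtm M P" using Wwalk dominate_walk True by blast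
        then show "\<exists>t\<in>{[k, k]}. wtm M s \<preceq> wtm M t" using M_kk unfolding EP_k by simp
      qed
    qed
    then show ?thesis using eq True M_kk R_k unfolding W_def by simp
  qed
qed

end


lemma neg1_pow: "(- 1::'g::linordered_ab_group_add smax) ^ m = (if even m then 1 else - 1)"
  by (induction m) (auto simp: minus_one_mult)

lemma ssign_comp: "permutation p \<Longrightarrow> permutation q \<Longrightarrow>
   (ssign (p \<circ> q) :: 'g::linordered_ab_group_add smax) = ssign p * ssign q"
  unfolding ssign_def by (auto simp: evenperm_comp minus_one_mult)

lemma ssign_inv: "permutation p \<Longrightarrow> ssign (inv p) = ssign p"
  unfolding ssign_def by (simp add: evenperm_inv)

lemma ssign_transpose: "a \<noteq> b \<Longrightarrow> ssign (transpose a b) = - 1"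
  unfolding ssign_def by (simp add: evenperm_swap)

lemma ssign_id: "ssign id = 1" unfolding ssign_def by simp

lemma ssign_nz: "ssign p \<noteq> (0::'g::linordered_ab_group_add smax) \<and> mo (ssign p :: 'g smax) = 0"
  unfolding ssign_def by (auto simp: sz)

definition cc :: "nat \<Rightarrow> nat \<Rightarrow> nat \<Rightarrow> nat" where
  "cc n i = (\<lambda>x. if x < i \<or> n < x then x else if x = n then i else Suc x)"

lemma cc_step: "i < n \<Longrightarrow> cc n i = transpose i (Suc i) \<circ> cc n (Suc i)"
  unfolding cc_def by (auto simp: fun_eq_iff transpose_def)

lemma cc_n: "cc n n = id"
  unfolding cc_def by (auto simp: fun_eq_iff)

lemma cc_props: "1 \<le> i \<Longrightarrow> i \<le> n \<Longrightarrow> cc n i permutes {1..n} \<and> evenperm (cc n i) = even (n - i)"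
proof (induction "n - i" arbitrary: i)
  case 0
  then have "i = n" by simp
  then show ?case using permutes_id[of "{1..n}"] by (simp add: cc_n id_def)
next
  case (Suc m)
  then have i: "i < n" "n - Suc i = m" by auto
  have IH: "cc n (Suc i) permutes {1..n} \<and> evenperm (cc n (Suc i)) = even (n - Suc i)"
    using Suc i by auto
  have tp: "transpose i (Suc i) permutes {1..n}" using Suc.prems i by (intro permutes_swap_id) auto
  have "cc n i permutes {1..n}" unfolding cc_step[OF i(1)] using IH tp by (intro permutes_compose) auto
  moreover have "permutation (cc n (Suc i))" using IH permutes_imp_permutation[of "{1..n}"] by simp
  moreover have "evenperm (cc n i) = even (n - i)"
    unfolding cc_step[OF i(1)] using IH tp i calculation(2)
    by (subst evenperm_comp) (auto simp: evenperm_swap permutation_swap_id permutes_imp_permutation Suc_diff_Suc)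
  ultimately show ?case by simp
qed

lemma cc_ins: "r < n \<Longrightarrow> cc n i r = (if r < i then r else Suc r)"
  unfolding cc_def by auto

lemma cc_at_n: "cc n i n = (if n < i then n else i)"
  unfolding cc_def by auto

lemma ssign_cc: "1 \<le> i \<Longrightarrow> i \<le> n \<Longrightarrow> (ssign (cc n i) :: 'g::linordered_ab_group_add smax) = (- 1) ^ (n - i)"
  using cc_props[of i n] unfolding ssign_def by (simp add: neg1_pow)



lemma bij_betw_remove:
  assumes "p permutes S" "a \<in> S"
  shows "bij_betw p (S - {a}) (S - {p a})"
proof -
  have inj: "inj p" using assms(1) permutes_inj by blast
  have "p ` (S - {a}) = p ` S - p ` {a}" using inj by (simp add: image_set_diff)
  also have "\<dots> = S - {p a}" using assms(1) permutes_image by fastforce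
  finally have eq: "p ` (S - {a}) = S - {p a}" .
  have "bij_betw p (S - {a}) (p ` (S - {a}))"
    by (rule inj_on_imp_bij_betw) (use inj in \<open>auto intro: inj_on_subset\<close>)
  then show ?thesis unfolding eq .
qed

lemma adj_expand:
  fixes B :: "'g::linordered_ab_group_add smat"
  assumes i: "i \<in> {1..n}" and k: "k \<in> {1..n}"
  shows "adj n B i k = (\<Sum>\<pi>\<in>{\<pi>. \<pi> permutes {1..n} \<and> \<pi> k = i}. ssign \<pi> * (\<Prod>x\<in>{1..n}-{k}. B x (\<pi> x)))"
proof -
  define ci where "ci = cc n i"
  define ck where "ck = cc n k"
  have ci: "ci permutes {1..n}" "ssign ci = ((- 1) ^ (n - i) :: 'g smax)"
    using cc_props[of i n] ssign_cc[of i n] i unfolding ci_def by auto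
  have ck: "ck permutes {1..n}" "ssign ck = ((- 1) ^ (n - k) :: 'g smax)"
    using cc_props[of k n] ssign_cc[of k n] k unfolding ck_def by auto
  have cin: "ci n = i" using i unfolding ci_def cc_at_n by auto
  have ckn: "ck n = k" using k unfolding ck_def cc_at_n by auto
  have ickk: "inv ck k = n" using ckn permutes_inverses(2)[OF ck(1)] by metis
  have icii: "inv ci i = n" using cin permutes_inverses(2)[OF ci(1)] by metis
  have pci: "permutation ci" "permutation ck" "permutation (inv ck)"
    using ci(1) ck(1) permutes_imp_permutation[of "{1..n}"] permutes_inv[OF ck(1)] by auto
  have n1: "1 \<le> n" using i by simp
  define S where "S = {\<sigma>. \<sigma> permutes {1..n-1}}"
  define T where "T = {\<pi>. \<pi> permutes {1..n} \<and> \<pi> k = i}"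
  define Phi where "Phi = (\<lambda>\<sigma>. ci \<circ> \<sigma> \<circ> inv ck)"
  define Psi where "Psi = (\<lambda>\<pi>. inv ci \<circ> \<pi> \<circ> ck)"
  have sub: "{1..n-1} \<subseteq> {1..n}" by auto
  have "adj n B i k = (- 1) ^ (i + k) * sdet (n - 1) (minor k i B)"
    unfolding adj_def by simp
  also have "\<dots> = (\<Sum>\<sigma>\<in>S. (- 1) ^ (i + k) * (ssign \<sigma> * (\<Prod>r=1..n-1. minor k i B r (\<sigma> r))))"
    unfolding sdet_def S_def by (simp add: sum_distrib_left)
  also have "\<dots> = (\<Sum>\<pi>\<in>T. ssign \<pi> * (\<Prod>x\<in>{1..n}-{k}. B x (\<pi> x)))"
  proof (rule sum.reindex_bij_witness[where j = Phi and i = Psi])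
    fix \<sigma> assume "\<sigma> \<in> S"
    then have s: "\<sigma> permutes {1..n-1}" unfolding S_def by simp
    then have s': "\<sigma> permutes {1..n}" using permutes_subset[OF _ sub] by blast
    show "Psi (Phi \<sigma>) = \<sigma>" unfolding Psi_def Phi_def
      by (simp add: o_assoc permutes_inv_o[OF ci(1)] permutes_inv_o[OF ck(1)])
        (simp add: o_assoc[symmetric] permutes_inv_o[OF ck(1)])
    have sn: "\<sigma> n = n" using s n1 by (simp add: permutes_not_in)
    show "Phi \<sigma> \<in> T" unfolding T_def Phi_def
      using permutes_compose[OF permutes_compose[OF permutes_inv[OF ck(1)] s'] ci(1)]
      by (simp add: ickk sn cin o_assoc)
    have ps: "permutation \<sigma>" using s permutes_imp_permutation[of "{1..n-1}"] by simp
    have sg: "ssign (Phi \<sigma>) = (- 1) ^ (i + k) * (ssign \<sigma> :: 'g smax)"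
    proof -
      have "ssign (Phi \<sigma>) = ssign ci * (ssign \<sigma> * (ssign ck :: 'g smax))"
        unfolding Phi_def using pci ps
        by (simp add: ssign_comp permutation_compose ssign_inv mult.assoc)
      also have "\<dots> = ((- 1) ^ (n - i + (n - k))) * ssign \<sigma>"
        using ci(2) ck(2) by (simp add: power_add ac_simps)
      also have "(- 1::'g smax) ^ (n - i + (n - k)) = (- 1) ^ (i + k)"
        unfolding neg1_pow using i k by auto
      finally show ?thesis .
    qed
    have pr: "(\<Prod>r=1..n-1. minor k i B r (\<sigma> r)) = (\<Prod>x\<in>{1..n}-{k}. B x (Phi \<sigma> x))"
    proof -
      have bij: "bij_betw ck {1..n-1} ({1..n}-{k})"
      proof -
        have "{1..n} - {n} = {1..n-1}" using n1 by auto
        then show ?thesis using bij_betw_remove[OF ck(1), of n] n1 ckn by simp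
      qed
      have "(\<Prod>x\<in>{1..n}-{k}. B x (Phi \<sigma> x)) = (\<Prod>r\<in>{1..n-1}. B (ck r) (Phi \<sigma> (ck r)))"
        using prod.reindex_bij_betw[OF bij, of "\<lambda>x. B x (Phi \<sigma> x)"] by simp
      also have "\<dots> = (\<Prod>r=1..n-1. minor k i B r (\<sigma> r))"
      proof (rule prod.cong[OF refl])
        fix r assume r: "r \<in> {1..n-1}"
        then have "\<sigma> r \<in> {1..n-1}" using permutes_in_image[OF s] by simp
        then have "\<sigma> r < n" by auto
        moreover have "r < n" using r by auto
        moreover have "Phi \<sigma> (ck r) = ci (\<sigma> r)" unfolding Phi_def
          by (simp add: permutes_inverses(2)[OF ck(1)])
        ultimately show "B (ck r) (Phi \<sigma> (ck r)) = minor k i B r (\<sigma> r)"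
          unfolding minor_def by (simp add: ck_def ci_def cc_ins)
      qed
      finally show ?thesis by simp
    qed
    show "ssign (Phi \<sigma>) * (\<Prod>x\<in>{1..n}-{k}. B x (Phi \<sigma> x)) =
          (- 1) ^ (i + k) * (ssign \<sigma> * (\<Prod>r=1..n-1. minor k i B r (\<sigma> r)))"
      using sg pr by (simp add: mult.assoc)
  next
    fix \<pi> assume "\<pi> \<in> T"
    then have p: "\<pi> permutes {1..n}" "\<pi> k = i" unfolding T_def by auto
    show "Phi (Psi \<pi>) = \<pi>" unfolding Psi_def Phi_def
      by (simp add: o_assoc permutes_inv_o[OF ci(1)] permutes_inv_o[OF ck(1)])
        (simp add: o_assoc[symmetric] permutes_inv_o[OF ck(1)])
    have pp: "Psi \<pi> permutes {1..n}" unfolding Psi_def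
      using permutes_compose[OF permutes_compose[OF ck(1) p(1)] permutes_inv[OF ci(1)]] by (simp add: o_assoc)
    have "Psi \<pi> n = n" unfolding Psi_def using ckn p(2) icii by simp
    then have "Psi \<pi> permutes {1..n-1}" using pp
    proof (intro permutes_superset[OF pp])
      fix x assume "x \<in> {1..n} - {1..n-1}"
      then have "x = n" by auto
      then show "Psi \<pi> x = x" using \<open>Psi \<pi> n = n\<close> by simp
    qed
    then show "Psi \<pi> \<in> S" unfolding S_def by simp
  qed
  finally show ?thesis unfolding T_def .
qed



fun cyc :: "nat \<Rightarrow> nat list \<Rightarrow> nat \<Rightarrow> nat" where
  "cyc k [] = id"
| "cyc k [x] = id"
| "cyc k (x # y # zs) = cyc k (y # zs) \<circ> transpose k x"

definition cpath :: "nat \<Rightarrow> nat list \<Rightarrow> bool" where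
  "cpath k P = (distinct P \<and> P \<noteq> [] \<and> last P = k)"

lemma cpath_tl: "cpath k (x # y # zs) \<Longrightarrow> cpath k (y # zs) \<and> x \<notin> set (y # zs) \<and> x \<noteq> k \<and> k \<in> set (y # zs)"
  unfolding cpath_def by (metis distinct.simps(2) last.simps last_in_set list.distinct(1))

lemma cyc_out: "cpath k P \<Longrightarrow> z \<notin> set P \<Longrightarrow> cyc k P z = z"
proof (induction k P rule: cyc.induct)
  case (3 k x y zs)
  then have "cpath k (y # zs)" "k \<in> set (y # zs)" using cpath_tl by blast+
  then show ?case using 3 by (auto simp: transpose_def)
qed auto

lemma cyc_k: "cpath k P \<Longrightarrow> cyc k P k = hd P"
proof (induction k P rule: cyc.induct)
  case (3 k x y zs)
  then have h: "cpath k (y # zs)" "x \<notin> set (y # zs)" using cpath_tl by blast+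
  then show ?case using cyc_out[OF h] by simp
qed (auto simp: cpath_def)

lemma cyc_next: "cpath k P \<Longrightarrow> Suc t < length P \<Longrightarrow> cyc k P (P ! t) = P ! Suc t"
proof (induction k P arbitrary: t rule: cyc.induct)
  case (3 k x y zs)
  then have h: "cpath k (y # zs)" "x \<notin> set (y # zs)" "x \<noteq> k" using cpath_tl by blast+
  show ?case
  proof (cases t)
    case 0
    then show ?thesis using cyc_k[OF h(1)] by simp
  next
    case (Suc s)
    have sl: "s < length zs" using 3(3) Suc by simp
    then have mem: "(y # zs) ! s \<in> set (y # zs)" by (intro nth_mem) simp
    then have n1: "(y # zs) ! s \<noteq> x" using h(2) by auto
    have lk: "(y # zs) ! length zs = k" using h(1) last_conv_nth[of "y # zs"] unfolding cpath_def by simp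
    have "(y # zs) ! s \<noteq> (y # zs) ! length zs" using h(1) sl unfolding cpath_def
      by (simp add: nth_eq_iff_index_eq del: nth_Cons_Suc)
    then have n2: "(y # zs) ! s \<noteq> k" using lk by simp
    have "cyc k (x # y # zs) ((x # y # zs) ! t) = cyc k (y # zs) ((y # zs) ! s)"
      using n1 n2 Suc by (simp add: transpose_def)
    also have "\<dots> = (y # zs) ! Suc s" by (rule 3(1)[where z = x]) (use h(1) sl in auto)
    finally show ?thesis using Suc by simp
  qed
qed auto

lemma cyc_permutes: "cpath k P \<Longrightarrow> set P \<subseteq> S \<Longrightarrow> cyc k P permutes S"
proof (induction k P rule: cyc.induct)
  case (3 k x y zs)
  then have h: "cpath k (y # zs)" "k \<in> set (y # zs)" using cpath_tl by blast+
  have "transpose k x permutes S" using 3(3) h(2) by (intro permutes_swap_id) auto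
  moreover have "cyc k (y # zs) permutes S" using 3 h by auto
  ultimately have "cyc k (y # zs) \<circ> transpose k x permutes S" by (rule permutes_compose)
  then show ?case by (simp only: cyc.simps)
qed (auto simp: permutes_id[unfolded id_def] id_def)

lemma cyc_sign: "cpath k P \<Longrightarrow> (ssign (cyc k P) :: 'g::linordered_ab_group_add smax) = (- 1) ^ (length P - 1)"
proof (induction k P rule: cyc.induct)
  case (3 k x y zs)
  then have h: "cpath k (y # zs)" "x \<noteq> k" using cpath_tl by blast+
  have "cyc k (y # zs) permutes set (y # zs)" using h by (intro cyc_permutes) auto
  then have "permutation (cyc k (y # zs))" using permutes_imp_permutation by blast
  have eqc: "cyc k (x # y # zs) = cyc k (y # zs) \<circ> transpose k x" by simp
  have "(ssign (cyc k (x # y # zs)) :: 'g smax) = ssign (cyc k (y # zs)) * ssign (transpose k x)"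
    unfolding eqc by (rule ssign_comp) (simp_all add: permutation_swap_id \<open>permutation (cyc k (y # zs))\<close>)
  also have "\<dots> = (- 1) ^ (length (y # zs) - 1) * (- 1)" using 3 h by (simp add: ssign_transpose)
  finally show ?case by (simp add: mult.commute del: cyc.simps)
qed (auto simp: ssign_id)

lemma cyc_inj:
  assumes "cpath k P" "cpath k Q" "hd P = hd Q" "cyc k P = cyc k Q"
  shows "P = Q"
proof -
  have eq: "t < length P \<Longrightarrow> t < length Q \<Longrightarrow> P ! t = Q ! t" for t
  proof (induction t)
    case 0
    then show ?case using assms(3) by (simp add: hd_conv_nth)
  next
    case (Suc t)
    have "P ! Suc t = cyc k P (P ! t)" using cyc_next[OF assms(1), of t] Suc.prems by simp
    also have "\<dots> = cyc k Q (Q ! t)" using Suc assms(4) by simp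
    also have "\<dots> = Q ! Suc t" using cyc_next[OF assms(2)] Suc by simp
    finally show ?case .
  qed
  have lens: "length P = length Q"
  proof (rule ccontr)
    assume ne: "length P \<noteq> length Q"
    have lp: "P ! (length P - 1) = k" "length P > 0" using assms(1) unfolding cpath_def by (auto simp: last_conv_nth)
    have lq: "Q ! (length Q - 1) = k" "length Q > 0" using assms(2) unfolding cpath_def by (auto simp: last_conv_nth)
    show False
    proof (cases "length P < length Q")
      case True
      then have "Q ! (length P - 1) = k" using eq[of "length P - 1"] lp by simp
      then have "length P - 1 = length Q - 1" using lq assms(2) True unfolding cpath_def
        by (metis diff_less less_imp_diff_less nth_eq_iff_index_eq zero_less_one)
      then show False using True lp(2) lq(2) by linarith
    next
      case False
      then have lt: "length Q < length P" using ne by simp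
      then have "P ! (length Q - 1) = k" using eq[of "length Q - 1"] lq by simp
      then have "length Q - 1 = length P - 1" using lp assms(1) lt unfolding cpath_def
        by (metis diff_less less_imp_diff_less nth_eq_iff_index_eq zero_less_one)
      then show False using lt lp(2) lq(2) by linarith
    qed
  qed
  show ?thesis using eq lens by (intro nth_equalityI) auto
qed

lemma orbit_path:
  assumes p: "\<pi> permutes S" "finite S" "k \<in> S" "\<pi> k = i"
  shows "\<exists>P. cpath k P \<and> hd P = i \<and> set P \<subseteq> S \<and> (\<forall>z\<in>set P. \<pi> z = cyc k P z)"
proof -
  have perm: "permutation \<pi>" using p permutes_imp_permutation by blast
  obtain m where m: "m > 0" "(\<pi> ^^ m) k = k" using permutation_self[OF perm] by blast
  have fs: "(\<pi> ^^ Suc a) x = (\<pi> ^^ a) (\<pi> x)" for a x by (simp only: funpow_Suc_right o_apply)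
  have ex: "(\<pi> ^^ (m - 1)) i = k" using m fs[of "m - 1" k] p(4) by simp
  define L where "L = (LEAST t. (\<pi> ^^ t) i = k)"
  have L: "(\<pi> ^^ L) i = k" unfolding L_def by (rule LeastI[of "\<lambda>t. (\<pi> ^^ t) i = k" "m - 1", OF ex])
  have Lmin: "t < L \<Longrightarrow> (\<pi> ^^ t) i \<noteq> k" for t unfolding L_def by (rule not_less_Least)
  define P where "P = map (\<lambda>t. (\<pi> ^^ t) i) [0..<Suc L]"
  have inj: "inj (\<pi> ^^ a)" for a using permutes_inj[OF p(1)] by simp
  have dist: "distinct P" unfolding P_def distinct_map
  proof (intro conjI inj_onI)
    fix s t assume st: "s \<in> set [0..<Suc L]" "t \<in> set [0..<Suc L]" "(\<pi> ^^ s) i = (\<pi> ^^ t) i"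
    show "s = t"
    proof (rule ccontr)
      assume "s \<noteq> t"
      have gen: "a < b \<Longrightarrow> b \<le> L \<Longrightarrow> (\<pi> ^^ a) i = (\<pi> ^^ b) i \<Longrightarrow> False" for a b
      proof -
        assume ab: "a < b" "b \<le> L" "(\<pi> ^^ a) i = (\<pi> ^^ b) i"
        have "(\<pi> ^^ b) i = (\<pi> ^^ a) ((\<pi> ^^ (b - a)) i)" using ab(1)
          by (metis funpow_add le_add_diff_inverse less_imp_le o_apply)
        then have "(\<pi> ^^ (b - a)) i = i" using ab(3) inj[of a] by (metis injD)
        then have "(\<pi> ^^ (b - a)) (\<pi> k) = \<pi> k" using p(4) by simp
        then have "\<pi> ((\<pi> ^^ (b - a)) k) = \<pi> k" by (metis funpow_swap1)
        then have "(\<pi> ^^ (b - a)) k = k" using permutes_inj[OF p(1)] by (metis injD)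
        moreover have "b - a = Suc (b - a - 1)" using ab by simp
        ultimately have "(\<pi> ^^ (b - a - 1)) i = k" using fs[of "b - a - 1" k] p(4) by simp
        moreover have "b - a - 1 < L" using ab by simp
        ultimately show False using Lmin by blast
      qed
      show False using gen[of s t] gen[of t s] st \<open>s \<noteq> t\<close> by (cases "s < t") auto
    qed
  qed simp
  have ne: "P \<noteq> []" unfolding P_def by simp
  have hdP: "hd P = i" unfolding P_def by (simp add: hd_map upt_conv_Cons del: upt_Suc)
  have lastP: "last P = k" unfolding P_def using L by (simp add: last_map)
  have cp: "cpath k P" using dist ne lastP unfolding cpath_def by simp
  have iS: "i \<in> S" using p permutes_in_image by metis
  have setP: "set P \<subseteq> S" unfolding P_def using permutes_in_funpow_image[OF p(1) iS] by auto
  have Pn: "t < Suc L \<Longrightarrow> P ! t = (\<pi> ^^ t) i" for t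
    unfolding P_def by (simp del: upt_Suc funpow.simps)
  have agree: "\<forall>z\<in>set P. \<pi> z = cyc k P z"
  proof
    fix z assume "z \<in> set P"
    then obtain t where t0: "t < length P" "P ! t = z" by (auto simp: in_set_conv_nth)
    have t: "t < Suc L" "z = P ! t" using t0 unfolding P_def by auto
    show "\<pi> z = cyc k P z"
    proof (cases "t < L")
      case True
      then have "cyc k P z = P ! Suc t" using cyc_next[OF cp] t unfolding P_def by simp
      also have "\<dots> = (\<pi> ^^ Suc t) i" using Pn[of "Suc t"] True by simp
      also have "\<dots> = \<pi> z" using t Pn[of t] by simp
      finally show ?thesis by simp
    next
      case False
      then have "t = L" using t by simp
      then have "z = k" using t L Pn[of t] by simp
      then show ?thesis using cyc_k[OF cp] hdP p(4) by simp
    qed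
  qed
  show ?thesis using cp hdP setP agree by blast
qed



lemma neg_neg_mult: "(- a) * (- b) = (a::'g::linordered_ab_group_add smax) * b"
  by (metis uminus_mult_smax uminus_mult_smax2 uminus_uminus_smax)

lemma mo_neg: "mo (- (a::'g::linordered_ab_group_add smax)) = mo a"
  by (cases a) auto

lemma neg_nz: "(- (a::'g::linordered_ab_group_add smax)) = 0 \<longleftrightarrow> a = 0"
  by (cases a) (auto simp: sz)

context tp begin

definition Tp :: "(nat \<Rightarrow> nat) \<Rightarrow> 'g smax" where
  "Tp \<pi> = (\<Prod>x\<in>{1..n}-{k}. B x (\<pi> x))"

definition lam :: "'g smax" where
  "lam = (\<Prod>x\<in>{1..n}-{k}. B x x)"

lemma cyc_term: "cpath k P \<Longrightarrow> set P \<subseteq> {1..n} \<Longrightarrow> ssign (cyc k P) * Tp (cyc k P) = lam * wtm M P"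
proof (induction P rule: induct_list012)
  case (2 x)
  then have "x = k" unfolding cpath_def by simp
  then show ?case unfolding Tp_def lam_def by (simp add: ssign_id[unfolded id_def])
next
  case (3 x y zs)
  have h: "cpath k (y # zs)" "x \<notin> set (y # zs)" "x \<noteq> k" using cpath_tl[OF "3.prems"(1)] by blast+
  have x: "x \<in> {1..n}" using "3.prems"(2) by simp
  have xy: "x \<noteq> y" using h(2) by simp
  define c' where "c' = cyc k (y # zs)"
  define c where "c = cyc k (x # y # zs)"
  have cc': "c = c' \<circ> transpose k x" unfolding c_def c'_def by simp
  have cx: "c x = y" unfolding cc' c'_def using cyc_k[OF h(1)] by simp
  have cz: "z \<noteq> x \<Longrightarrow> z \<noteq> k \<Longrightarrow> c z = c' z" for z unfolding cc' by (simp add: transpose_def)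
  have c'x: "c' x = x" unfolding c'_def using cyc_out[OF h(1) h(2)] .
  define X where "X = {1..n} - {k}"
  have xX: "x \<in> X" using x h(3) unfolding X_def by simp
  define Q where "Q = (\<Prod>z\<in>X-{x}. B z (c' z))"
  have Tc: "Tp c = B x y * Q" unfolding Tp_def X_def[symmetric] Q_def
    using prod.remove[of X x "\<lambda>z. B z (c z)"] xX cx cz unfolding X_def by (auto intro!: prod.cong)
  have Tc': "Tp c' = B x x * Q" unfolding Tp_def X_def[symmetric] Q_def
    using prod.remove[of X x "\<lambda>z. B z (c' z)"] xX c'x unfolding X_def by simp
  have pc': "permutation c'" unfolding c'_def
    using cyc_permutes[OF h(1), of "set (y # zs)"] permutes_imp_permutation by blast
  have "ssign c = ssign c' * (ssign (transpose k x) :: 'g smax)" unfolding cc'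
    by (rule ssign_comp) (simp_all add: pc' permutation_swap_id)
  also have "\<dots> = ssign c' * (- 1)" using h(3) by (simp add: ssign_transpose)
  also have "\<dots> = - ssign c'" by (simp only: mult.commute[of _ "- 1"] minus_one_mult)
  finally have sc: "ssign c = - (ssign c' :: 'g smax)" .
  have IH: "ssign c' * Tp c' = lam * wtm M (y # zs)" unfolding c'_def
    using "3.IH"(2) h(1) "3.prems"(2) by simp
  have exB: "eps x * B x x = 1" using B_diag[OF x h(3)] by simp
  have Mxy: "M x y = eps x * A x y" unfolding M_def Ak_def using xy by simp
  have "ssign c * Tp c = (- ssign c') * (- A x y) * Q" unfolding sc Tc B_off[OF xy] by (simp add: mult.assoc)
  also have "\<dots> = ssign c' * A x y * Q" by (simp add: neg_neg_mult)
  also have "\<dots> = ssign c' * A x y * Q * (eps x * B x x)" by (simp add: exB)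
  also have "\<dots> = M x y * (ssign c' * Tp c')" unfolding Mxy Tc' by (simp add: ac_simps)
  also have "\<dots> = lam * wtm M (x # y # zs)" unfolding IH by (simp add: ac_simps)
  finally show ?case unfolding c_def .
qed (simp add: cpath_def)

lemma term_dominated:
  assumes p: "\<pi> permutes {1..n}" "\<pi> k = i"
  shows "\<exists>P\<in>EP i. ssign \<pi> * Tp \<pi> \<preceq> ssign (cyc k P) * Tp (cyc k P)"
proof -
  obtain P where P: "cpath k P" "hd P = i" "set P \<subseteq> {1..n}" "\<forall>z\<in>set P. \<pi> z = cyc k P z"
    using orbit_path[OF p(1) _ _ p(2)] kin by auto
  have PEP: "P \<in> EP i" using P unfolding EP_def cpath_def by auto
  define c where "c = cyc k P"
  have cperm: "c permutes {1..n}" unfolding c_def using cyc_permutes[OF P(1,3)] .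
  have cP: "c permutes set P" unfolding c_def using cyc_permutes[OF P(1)] by simp
  have kP: "k \<in> set P" using P(1) unfolding cpath_def by auto
  show ?thesis
  proof (cases "\<pi> = c")
    case True
    show ?thesis by (rule bexI[where x = P]) (simp_all add: True c_def PEP)
  next
    case False
    then obtain z where z: "\<pi> z \<noteq> c z" by auto
    define U where "U = {1..n} - set P"
    define X where "X = {1..n} - {k}"
    have zU: "z \<in> U"
    proof (rule ccontr)
      assume "z \<notin> U"
      then have "z \<in> set P \<or> z \<notin> {1..n}" unfolding U_def by auto
      then show False using z P(4) permutes_not_in[OF p(1)] permutes_not_in[OF cperm] unfolding c_def by auto
    qed
    have cU: "x \<in> U \<Longrightarrow> c x = x" for x unfolding U_def c_def using cyc_out[OF P(1)] by auto
    have piz: "\<pi> z \<noteq> z" using z cU[OF zU] by simp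
    show ?thesis
    proof (cases "Tp \<pi> = 0")
      case True
      then show ?thesis by (intro bexI[OF _ PEP]) simp
    next
      case False
      have fX: "finite X" unfolding X_def by simp
      have nzp: "\<forall>x\<in>X. B x (\<pi> x) \<noteq> 0"
        using False prod_zero_smax[OF fX, of _ "\<lambda>x. B x (\<pi> x)"] unfolding Tp_def X_def[symmetric] by blast
      have UX: "U \<subseteq> X" using kP unfolding U_def X_def by auto
      have XPU: "X = (X \<inter> set P) \<union> U" "(X \<inter> set P) \<inter> U = {}" using UX unfolding U_def X_def by auto
      have nzc: "\<forall>x\<in>X. B x (c x) \<noteq> 0"
      proof
        fix x assume xX: "x \<in> X"
        show "B x (c x) \<noteq> 0"
        proof (cases "x \<in> set P")
          case True
          then show ?thesis using nzp xX P(4) unfolding c_def by auto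
        next
          case False
          then have "x \<in> U" using xX unfolding U_def X_def by auto
          then show ?thesis using cU B_diag[of x] xX unfolding X_def by auto
        qed
      qed
      have piP: "\<pi> ` set P = set P"
      proof -
        have "\<pi> ` set P = c ` set P" using P(4) unfolding c_def by (auto simp: image_def)
        then show ?thesis using permutes_image[OF cP] by simp
      qed
      have injp: "inj \<pi>" using permutes_inj[OF p(1)] .
      have piU: "\<pi> ` U = U" unfolding U_def using piP permutes_image[OF p(1)] injp
        by (simp add: image_set_diff)
      define h where "h = (\<lambda>x. mo (B x (\<pi> x)))"
      have hle: "x \<in> U \<Longrightarrow> h x + h x \<le> f x + f (\<pi> x) \<and> (\<pi> x \<noteq> x \<longrightarrow> h x + h x < f x + f (\<pi> x))" for x
      proof -
        assume xU: "x \<in> U"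
        then have xr: "x \<in> {1..n}" "x \<noteq> k" using kP unfolding U_def by auto
        have "\<pi> x \<in> U" using xU piU by blast
        then have yr: "\<pi> x \<in> {1..n}" "\<pi> x \<noteq> k" using kP unfolding U_def by auto
        show ?thesis
        proof (cases "\<pi> x = x")
          case True
          then show ?thesis using B_diag[OF xr] unfolding h_def by simp
        next
          case False
          have Bxy: "B x (\<pi> x) = - A x (\<pi> x)" using B_off False by metis
          then have Anz: "A x (\<pi> x) \<noteq> 0" using nzp xr unfolding X_def by (auto simp: neg_nz)
          have "h x + h x < d x + d (\<pi> x)" unfolding h_def Bxy mo_neg
            using offA[OF xr(1) yr(1) _ Anz] False by metis
          also have "\<dots> \<le> f x + f (\<pi> x)" using d_le_f[OF xr(1)] d_le_f[OF yr(1)] by (rule add_mono)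
          finally show ?thesis using False by simp
        qed
      qed
      have fU: "finite U" unfolding U_def by simp
      have "(\<Sum>x\<in>U. h x + h x) < (\<Sum>x\<in>U. f x + f (\<pi> x))"
        using hle zU piz by (intro sum_strict_mono_ex1[OF fU]) auto
      moreover have "(\<Sum>x\<in>U. f (\<pi> x)) = (\<Sum>x\<in>U. f x)"
        using sum.reindex[of \<pi> U f] injp piU by (simp add: inj_on_subset)
      ultimately have "(\<Sum>x\<in>U. h x) + (\<Sum>x\<in>U. h x) < (\<Sum>x\<in>U. f x) + (\<Sum>x\<in>U. f x)"
        by (simp add: sum.distrib)
      then have lt: "(\<Sum>x\<in>U. h x) < (\<Sum>x\<in>U. f x)" by (rule two_lt)
      have mop: "mo (Tp \<pi>) = (\<Sum>x\<in>X \<inter> set P. h x) + (\<Sum>x\<in>U. h x)"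
        using prod_nz[OF fX nzp] sum.union_disjoint[of "X \<inter> set P" U h] XPU fX fU
        unfolding Tp_def X_def[symmetric] h_def by (metis finite_Int)
      have moc: "mo (Tp c) = (\<Sum>x\<in>X \<inter> set P. h x) + (\<Sum>x\<in>U. f x)"
      proof -
        have "mo (Tp c) = (\<Sum>x\<in>X. mo (B x (c x)))"
          using prod_nz[OF fX nzc] unfolding Tp_def X_def[symmetric] by simp
        also have "\<dots> = (\<Sum>x\<in>X \<inter> set P. mo (B x (c x))) + (\<Sum>x\<in>U. mo (B x (c x)))"
          using sum.union_disjoint[of "X \<inter> set P" U] XPU fX fU by (metis finite_Int)
        also have "(\<Sum>x\<in>X \<inter> set P. mo (B x (c x))) = (\<Sum>x\<in>X \<inter> set P. h x)"
          unfolding h_def c_def using P(4) by (intro sum.cong) auto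
        also have "(\<Sum>x\<in>U. mo (B x (c x))) = (\<Sum>x\<in>U. f x)"
        proof (rule sum.cong[OF refl])
          fix x assume xU: "x \<in> U"
          then have "x \<in> {1..n}" "x \<noteq> k" using kP unfolding U_def by auto
          then show "mo (B x (c x)) = f x" using cU[OF xU] B_diag by simp
        qed
        finally show ?thesis .
      qed
      have Tcnz: "Tp c \<noteq> 0" using prod_nz[OF fX nzc] unfolding Tp_def X_def[symmetric] by simp
      have "ssign \<pi> * Tp \<pi> \<preceq> ssign c * Tp c"
      proof (rule prec_mo, rule disjI2, intro conjI)
        show "ssign \<pi> * Tp \<pi> \<noteq> 0" using ssign_nz False mult_nz by metis
        show "ssign c * Tp c \<noteq> 0" using ssign_nz Tcnz mult_nz by metis
        show "mo (ssign \<pi> * Tp \<pi>) < mo (ssign c * Tp c)"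
        proof -
          have s1: "ssign \<pi> \<noteq> (0::'g smax) \<and> mo (ssign \<pi> :: 'g smax) = 0" by (rule ssign_nz)
          have s2: "ssign c \<noteq> (0::'g smax) \<and> mo (ssign c :: 'g smax) = 0" by (rule ssign_nz)
          have a: "mo (ssign \<pi> * Tp \<pi>) = mo (Tp \<pi>)"
            using mo_mult[of "ssign \<pi>" "Tp \<pi>"] s1 False by simp
          have b: "mo (ssign c * Tp c) = mo (Tp c)"
            using mo_mult[of "ssign c" "Tp c"] s2 Tcnz by simp
          show ?thesis unfolding a b mop moc using lt by simp
        qed
      qed
      then show ?thesis unfolding c_def by (rule bexI[rotated, OF PEP])
    qed
  qed
qed

lemma v_expand:
  assumes i: "i \<in> {1..n}"
  shows "adj n B i k = lam * R i"
proof -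
  define S where "S = {\<pi>. \<pi> permutes {1..n} \<and> \<pi> k = i}"
  have "adj n B i k = (\<Sum>\<pi>\<in>S. ssign \<pi> * Tp \<pi>)"
    unfolding S_def Tp_def using adj_expand[OF i kin] by simp
  also have "\<dots> = (\<Sum>\<pi>\<in>cyc k ` EP i. ssign \<pi> * Tp \<pi>)"
  proof (rule sum_dominated)
    show "finite S" unfolding S_def using finite_permutations[of "{1..n}"] by (auto intro: finite_subset)
    show "cyc k ` EP i \<subseteq> S" unfolding S_def EP_def
      using cyc_permutes cyc_k unfolding cpath_def by auto
    show "\<forall>s\<in>S. \<exists>t\<in>cyc k ` EP i. ssign s * Tp s \<preceq> ssign t * Tp t"
      unfolding S_def using term_dominated by blast
  qed
  also have "\<dots> = (\<Sum>P\<in>EP i. ssign (cyc k P) * Tp (cyc k P))"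
  proof (rule sum.reindex[unfolded comp_def])
    show "inj_on (cyc k) (EP i)"
      by (rule inj_onI) (rule cyc_inj, auto simp: EP_def cpath_def)
  qed
  also have "\<dots> = (\<Sum>P\<in>EP i. lam * wtm M P)"
    by (rule sum.cong[OF refl]) (rule cyc_term, auto simp: EP_def cpath_def)
  also have "\<dots> = lam * R i" unfolding R_def by (simp add: sum_distrib_left)
  finally show ?thesis .
qed

end


definition lowb :: "'g::linordered_ab_group_add \<Rightarrow> 'g smax \<Rightarrow> bool" where
  "lowb c z = (z = 0 \<or> (z \<noteq> 0 \<and> mo z < c))"

lemma lowb_add: "lowb c a \<Longrightarrow> lowb c b \<Longrightarrow> lowb c (a + b)"
  unfolding lowb_def by (cases a; cases b) (auto simp: sz sadd_def)

lemma lowb_sum: "finite S \<Longrightarrow> \<forall>j\<in>S. lowb c (g j) \<Longrightarrow> lowb c (\<Sum>j\<in>S. g j)"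
proof (induction S rule: finite_induct)
  case empty
  then show ?case by (simp add: lowb_def)
next
  case (insert x F)
  then show ?case by (simp add: lowb_add)
qed

lemma lowb_neg: "lowb c z \<Longrightarrow> lowb c (- z)"
  unfolding lowb_def by (cases z) (auto simp: sz)

lemma absorb: "y \<noteq> 0 \<Longrightarrow> lowb (mo y) Q \<Longrightarrow> y + Q = (y::'g::linordered_ab_group_add smax)"
  unfolding lowb_def by (cases y; cases Q) (auto simp: sz)

lemma absorb2: "y = P + Q \<Longrightarrow> y \<noteq> 0 \<Longrightarrow> lowb (mo y) Q \<Longrightarrow> P = (y::'g::linordered_ab_group_add smax)"
  unfolding lowb_def by (cases y; cases Q; cases P) (auto simp: sz sadd_def split: if_splits)

lemma lowb_split: "lowb c (P + Q) \<Longrightarrow> lowb c Q \<Longrightarrow> lowb c (P::'g::linordered_ab_group_add smax)"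
  unfolding lowb_def by (cases P; cases Q) (auto simp: sz sadd_def split: if_splits)

lemma nabla_signed: "signed a \<Longrightarrow> signed b \<Longrightarrow> a \<nabla> b \<Longrightarrow> a = (b::'g::linordered_ab_group_add smax)"
  unfolding nabla_def balanced_def signed_def minus_smax_def
  by (cases a; cases b) (auto simp: sz sadd_def split: if_splits; metis sgn.exhaust sneg.simps)+

lemma nabla_low: "signed x \<Longrightarrow> x \<noteq> 0 \<Longrightarrow> lowb (mo x) z \<Longrightarrow> \<not> x \<nabla> (z::'g::linordered_ab_group_add smax)"
proof
  assume h: "signed x" "x \<noteq> 0" "lowb (mo x) z" "x \<nabla> z"
  have "x - z = x" unfolding minus_smax_def using absorb[OF h(2) lowb_neg[OF h(3)]] .
  then have "balanced x" using h(4) unfolding nabla_def by simp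
  then show False using h(1,2) unfolding balanced_def signed_def by auto
qed

lemma bal_neg: "balanced (x + - (x::'g::linordered_ab_group_add smax))"
proof (cases x)
  case (Nz s a)
  then show ?thesis unfolding balanced_def by (cases s) (auto simp: sadd_def)
qed (simp add: balanced_def sz)

lemma bal_add: "balanced a \<Longrightarrow> balanced b \<Longrightarrow> balanced (a + (b::'g::linordered_ab_group_add smax))"
  unfolding balanced_def by (auto simp: sz sadd_def split: if_splits)

lemma bal_mult: "balanced a \<Longrightarrow> balanced (c * (a::'g::linordered_ab_group_add smax))"
  unfolding balanced_def by (cases c) (auto simp: sz)

lemma signed_mult: "signed a \<Longrightarrow> signed b \<Longrightarrow> signed (a * (b::'g::linordered_ab_group_add smax))"
  unfolding signed_def by (cases a; cases b) (auto; metis sgn.exhaust smul.simps)+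

lemma signed_inv: "signed a \<Longrightarrow> a \<noteq> 0 \<Longrightarrow> \<exists>b. b * a = (1::'g::linordered_ab_group_add smax) \<and> signed b"
proof -
  assume h: "signed a" "a \<noteq> 0"
  then obtain s u where a: "a = Nz s u" "s \<noteq> SB" unfolding signed_def by (cases a) (auto simp: sz)
  have "Nz s (- u) * a = 1 \<and> signed (Nz s (- u))" using a unfolding signed_def by (cases s) (auto simp: sz)
  then show ?thesis by blast
qed

lemma signed_prod: "finite X \<Longrightarrow> \<forall>x\<in>X. signed (g x) \<Longrightarrow> signed (\<Prod>x\<in>X. (g x::'g::linordered_ab_group_add smax))"
proof (induction X rule: finite_induct)
  case empty
  then show ?case by (simp add: signed_def sz)
next
  case (insert x F)
  then show ?case by (simp add: signed_mult)
qed



lemma arith2: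
  fixes a b c e u v :: "'g::linordered_ab_group_add"
  assumes "a + a + u < v" "b \<le> e" "e + e + v \<le> c + c + u"
  shows "a + b < c"
proof -
  have "(a + b) + (a + b) + u = (a + a + u) + (b + b)" by (simp add: algebra_simps)
  also have "\<dots> < v + (b + b)" using assms(1) by simp
  also have "\<dots> \<le> v + (e + e)" using assms(2) by (simp add: add_mono)
  also have "\<dots> = e + e + v" by (simp add: algebra_simps)
  also have "\<dots> \<le> c + c + u" by (rule assms(3))
  finally have "(a + b) + (a + b) < c + c" by simp
  then show ?thesis by (rule two_lt)
qed

context tp begin

lemma compare:
  assumes sx: "\<forall>i\<in>{1..n}. signed (x i)" and sy: "\<forall>i\<in>{1..n}. signed (y i)"
    and xk: "x k = y k"
    and rx: "\<forall>i\<in>{1..n}-{k}. x i \<nabla> (\<Sum>j\<in>{1..n}-{i}. M i j * x j)"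
    and ry: "\<forall>i\<in>{1..n}-{k}. y i = (\<Sum>j\<in>{1..n}-{i}. M i j * y j)"
  shows "\<forall>i\<in>{1..n}. x i = y i"
proof (rule ccontr)
  assume "\<not> (\<forall>i\<in>{1..n}. x i = y i)"
  define D where "D = {i\<in>{1..n}. x i \<noteq> y i}"
  have Dne: "D \<noteq> {}" using \<open>\<not> (\<forall>i\<in>{1..n}. x i = y i)\<close> unfolding D_def by auto
  have fD: "finite D" unfolding D_def by simp
  define \<delta> where "\<delta> i = (if x i = 0 then mo (y i) else if y i = 0 then mo (x i) else max (mo (x i)) (mo (y i)))" for i
  define \<Phi> where "\<Phi> i = \<delta> i + \<delta> i + f i" for i
  obtain i0 where i0: "i0 \<in> D" "\<Phi> i0 = Max (\<Phi> ` D)"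
  proof -
    have "Max (\<Phi> ` D) \<in> \<Phi> ` D" using Max_in[of "\<Phi> ` D"] fD Dne by simp
    then show ?thesis using that by (metis imageE)
  qed
  have i0max: "j \<in> D \<Longrightarrow> \<Phi> j \<le> \<Phi> i0" for j using i0(2) fD by simp
  have i0r: "i0 \<in> {1..n}" "x i0 \<noteq> y i0" using i0(1) unfolding D_def by auto
  have i0k: "i0 \<noteq> k" using i0r xk by auto
  have dx: "x j \<noteq> 0 \<Longrightarrow> mo (x j) \<le> \<delta> j" for j unfolding \<delta>_def by auto
  have dy: "y j \<noteq> 0 \<Longrightarrow> mo (y j) \<le> \<delta> j" for j unfolding \<delta>_def by auto
  define N where "N = {1..n} - {i0}"
  have fN: "finite N" unfolding N_def by simp
  have tm: "lowb (\<delta> i0) (M i0 j * z j)"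
    if j: "j \<in> N \<inter> D" and zd: "z j \<noteq> 0 \<Longrightarrow> mo (z j) \<le> \<delta> j" for j and z :: "nat \<Rightarrow> 'g smax"
  proof (cases "M i0 j = 0 \<or> z j = 0")
    case True
    then show ?thesis unfolding lowb_def by (auto simp: sz)
  next
    case False
    have jr: "j \<in> {1..n}" "j \<noteq> i0" using j unfolding N_def by auto
    have e: "mo (M i0 j) + mo (M i0 j) + f i0 < f j" using edge[OF i0r(1) jr(1)] False jr(2) by auto
    have zdj: "mo (z j) \<le> \<delta> j" using zd False by simp
    have pj: "\<delta> j + \<delta> j + f j \<le> \<delta> i0 + \<delta> i0 + f i0" using i0max[of j] j unfolding \<Phi>_def by simp
    have "mo (M i0 j) + mo (z j) < \<delta> i0" by (rule arith2[OF e zdj pj])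
    then show ?thesis unfolding lowb_def using False mo_mult mult_nz by metis
  qed
  define P where "P = (\<Sum>j\<in>N - D. M i0 j * x j)"
  define Qx where "Qx = (\<Sum>j\<in>N \<inter> D. M i0 j * x j)"
  define Qy where "Qy = (\<Sum>j\<in>N \<inter> D. M i0 j * y j)"
  have Py: "P = (\<Sum>j\<in>N - D. M i0 j * y j)" unfolding P_def N_def D_def by (rule sum.cong) auto
  have lQx: "lowb (\<delta> i0) Qx" unfolding Qx_def using fN tm[of _ x] dx by (intro lowb_sum) auto
  have lQy: "lowb (\<delta> i0) Qy" unfolding Qy_def using fN tm[of _ y] dy by (intro lowb_sum) auto
  have i0K: "i0 \<in> {1..n} - {k}" using i0r i0k by simp
  have sx1: "(\<Sum>j\<in>N. M i0 j * x j) = P + Qx"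
    using sum.Int_Diff[OF fN, of "\<lambda>j. M i0 j * x j" D] unfolding P_def Qx_def by (simp add: add.commute)
  have sy1: "(\<Sum>j\<in>N. M i0 j * y j) = P + Qy"
    using sum.Int_Diff[OF fN, of "\<lambda>j. M i0 j * y j" D] unfolding Py Qy_def by (simp add: add.commute)
  have ex: "x i0 \<nabla> P + Qx" using rx[rule_format, OF i0K] sx1 unfolding N_def by simp
  have ey: "y i0 = P + Qy" using ry[rule_format, OF i0K] sy1 unfolding N_def by simp
  have sx0: "signed (x i0)" "signed (y i0)" using sx sy i0r by auto
  show False
  proof (cases "y i0 \<noteq> 0 \<and> mo (y i0) = \<delta> i0")
    case True
    then have "P = y i0" using absorb2[OF ey] lQy by simp
    then have "P + Qx = y i0" using absorb[of "y i0" Qx] True lQx by simp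
    then have "x i0 = y i0" using nabla_signed[OF sx0] ex by simp
    then show False using i0r by simp
  next
    case False
    have x0: "x i0 \<noteq> 0 \<and> mo (x i0) = \<delta> i0 \<and> lowb (\<delta> i0) (y i0)"
    proof (cases "y i0 = 0")
      case True
      then show ?thesis using i0r unfolding \<delta>_def lowb_def by auto
    next
      case yn: False
      then have "mo (y i0) \<noteq> \<delta> i0" using False by simp
      then have "x i0 \<noteq> 0" unfolding \<delta>_def using yn by auto
      then show ?thesis using yn \<open>mo (y i0) \<noteq> \<delta> i0\<close> unfolding \<delta>_def lowb_def by (auto simp: max_def)
    qed
    have "lowb (\<delta> i0) P" using lowb_split[of _ P Qy] x0 ey lQy by simp
    then have "lowb (mo (x i0)) (P + Qx)" using lowb_add lQx x0 by simp
    then show False using nabla_low[OF sx0(1)] x0 ex by blast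
  qed
qed

end


context tp begin

definition Mx :: "'g smat" where "Mx = (\<lambda>i j. gm * idm i j - Dk A k i j)"
definition E0 :: "'g smat" where "E0 = (\<lambda>i j. if i = j \<and> i \<in> {1..n} then eps i else 0)"

lemma Mx_off: "i \<noteq> j \<Longrightarrow> Mx i j = 0"
  unfolding Mx_def idm_def Dk_def minus_smax_def by simp

lemma Mx_diag: "i \<in> {1..n} \<Longrightarrow> eps i * Mx i i = 1 \<and> Mx i i * eps i = 1"
proof -
  assume i: "i \<in> {1..n}"
  show ?thesis
  proof (cases "i < k")
    case True
    then have "Mx i i = Nz SN (d i)" using d_before[of i] diag[OF i] i
      unfolding Mx_def idm_def Dk_def minus_smax_def gm_eq by (simp add: sz)
    then show ?thesis using True unfolding eps_def by (simp add: sz)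
  next
    case False
    then have "Mx i i = Nz SP g" unfolding Mx_def idm_def Dk_def minus_smax_def gm_eq by (simp add: sz)
    then show ?thesis using False unfolding eps_def by (simp add: sz)
  qed
qed

lemma sum_single:
  assumes "i \<in> {1..n}" "\<And>l. l \<in> {1..n} \<Longrightarrow> l \<noteq> i \<Longrightarrow> h l = (0::'g smax)"
  shows "(\<Sum>l=1..n. h l) = h i"
proof -
  have "(\<Sum>l=1..n. h l) = h i + (\<Sum>l\<in>{1..n}-{i}. h l)" using sum.remove[of "{1..n}" i h] assms(1) by simp
  also have "(\<Sum>l\<in>{1..n}-{i}. h l) = 0" using assms(2) by (intro sum.neutral) auto
  finally show ?thesis by simp
qed

lemma E_eq: "mat_inv n Mx = E0"
  unfolding mat_inv_def
proof (rule the_equality)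
  show "(\<forall>i j. \<not> (i \<in> {1..n} \<and> j \<in> {1..n}) \<longrightarrow> E0 i j = 0) \<and>
    (\<forall>i\<in>{1..n}. \<forall>j\<in>{1..n}. mmul n Mx E0 i j = idm i j \<and> mmul n E0 Mx i j = idm i j)"
  proof (intro conjI allI ballI impI)
    fix i j :: nat assume "\<not> (i \<in> {1..n} \<and> j \<in> {1..n})"
    then show "E0 i j = 0" unfolding E0_def by auto
  next
    fix i j assume ij: "i \<in> {1..n}" "j \<in> {1..n}"
    have "mmul n Mx E0 i j = Mx i i * E0 i j" unfolding mmul_def
      by (rule sum_single[OF ij(1)]) (simp add: Mx_off)
    then show "mmul n Mx E0 i j = idm i j" using Mx_diag[OF ij(1)] ij unfolding E0_def idm_def
      by (cases "i = j") auto
    have "mmul n E0 Mx i j = eps i * Mx i j" unfolding mmul_def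
      using sum_single[OF ij(1), of "\<lambda>l. E0 i l * Mx l j"] ij(1) unfolding E0_def by simp
    then show "mmul n E0 Mx i j = idm i j" using Mx_diag[OF ij(1)] Mx_off unfolding idm_def by auto
  qed
next
  fix X assume X: "(\<forall>i j. \<not> (i \<in> {1..n} \<and> j \<in> {1..n}) \<longrightarrow> X i j = 0) \<and>
    (\<forall>i\<in>{1..n}. \<forall>j\<in>{1..n}. mmul n Mx X i j = idm i j \<and> mmul n X Mx i j = idm i j)"
  show "X = E0"
  proof (intro ext)
    fix i j
    show "X i j = E0 i j"
    proof (cases "i \<in> {1..n} \<and> j \<in> {1..n}")
      case True
      then have ij: "i \<in> {1..n}" "j \<in> {1..n}" by auto
      have "mmul n Mx X i j = Mx i i * X i j" unfolding mmul_def
        by (rule sum_single[OF ij(1)]) (simp add: Mx_off)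
      then have "Mx i i * X i j = idm i j" using X ij by simp
      then have "eps i * (Mx i i * X i j) = eps i * idm i j" by simp
      then have "X i j = eps i * idm i j" using Mx_diag[OF ij(1)] by (simp add: mult.assoc[symmetric])
      then show ?thesis unfolding E0_def idm_def using ij by auto
    next
      case False
      then show ?thesis using X unfolding E0_def by auto
    qed
  qed
qed

lemma EM: "i \<in> {1..n} \<Longrightarrow> mmul n (mat_inv n Mx) (Ak A k) i j = M i j"
  unfolding E_eq mmul_def M_def
  by (subst sum_single[of i]) (auto simp: E0_def)

lemma lam_nz: "lam \<noteq> 0 \<and> signed lam"
  unfolding lam_def using B_diag prod_nz[of "{1..n}-{k}" "\<lambda>x. B x x"] signed_prod[of "{1..n}-{k}" "\<lambda>x. B x x"]
  by auto

lemma lam_eq: "lam = (- 1) ^ (k - 1) * (\<Prod>i=1..k-1. A i i) * gm ^ (n - k)"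
proof -
  have split: "{1..n}-{k} = {1..k-1} \<union> {Suc k..n}" using kin by auto
  have "lam = (\<Prod>x\<in>{1..k-1}. B x x) * (\<Prod>x\<in>{Suc k..n}. B x x)"
    unfolding lam_def split by (rule prod.union_disjoint) auto
  also have "(\<Prod>x\<in>{1..k-1}. B x x) = (\<Prod>x\<in>{1..k-1}. (- 1) * A x x)"
  proof (rule prod.cong[OF refl])
    fix x assume x: "x \<in> {1..k-1}"
    then have "x \<in> {1..n}" "x < k" using kin by auto
    then show "B x x = - 1 * A x x" using B_lt diag by (simp add: minus_one_mult sz)
  qed
  also have "\<dots> = (- 1) ^ (k - 1) * (\<Prod>i=1..k-1. A i i)" by (simp add: prod.distrib)
  also have "(\<Prod>x\<in>{Suc k..n}. B x x) = (\<Prod>x\<in>{Suc k..n}. gm)"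
    using B_gt gm_eq by (intro prod.cong) auto
  also have "\<dots> = gm ^ (n - k)" by simp
  finally show ?thesis .
qed

lemma R_signed:
  assumes "\<forall>i\<in>{1..n}. signed (lam * R i)"
  shows "\<forall>i\<in>{1..n}. signed (R i)"
proof -
  obtain li where li: "li * lam = 1" "signed li" using signed_inv lam_nz by blast
  show ?thesis
  proof
    fix i assume "i \<in> {1..n}"
    then have "signed (li * (lam * R i))" using signed_mult li assms by blast
    then show "signed (R i)" using li by (simp add: mult.assoc[symmetric])
  qed
qed

lemma R_offdiag:
  assumes i: "i \<in> {1..n}" "i \<noteq> k"
  shows "R i = (\<Sum>j\<in>{1..n}-{i}. M i j * R j)"
proof -
  have eq: "R i = M i i * R i + (\<Sum>j\<in>{1..n}-{i}. M i j * R j)"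
    using R_fix[OF i(1)] sum.remove[of "{1..n}" i "\<lambda>j. M i j * R j"] i(1) by simp
  show ?thesis
  proof (cases "R i = 0")
    case True
    then show ?thesis using eq by simp
  next
    case False
    have "lowb (mo (R i)) (M i i * R i)"
      using M_diag_small[OF i] False mo_mult[of "M i i" "R i"] mult_nz[of "M i i" "R i"]
      unfolding lowb_def by auto
    then show ?thesis using absorb2[of "R i" "\<Sum>j\<in>{1..n}-{i}. M i j * R j" "M i i * R i"] eq False
      by (simp add: add.commute)
  qed
qed

end


context tp begin

lemma vv_eq: "i \<in> {1..n} \<Longrightarrow> adj n B i k = lam * R i"
  by (rule v_expand)

lemma claim1: "i \<in> {1..n} \<Longrightarrow> adj n B i k = lam * kstar n (mmul n (mat_inv n Mx) (Ak A k)) i k"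
  using vv_eq kstar_R[of i "mmul n (mat_inv n Mx) (Ak A k)"] EM by simp

lemma Ak_R: 
  assumes i: "i \<in> {1..n}"
  shows "(\<Sum>j=1..n. Ak A k i j * R j) = Mx i i * R i"
proof -
  have "eps i * (\<Sum>j=1..n. Ak A k i j * R j) = (\<Sum>j=1..n. M i j * R j)"
    unfolding M_def by (simp add: sum_distrib_left mult.assoc)
  also have "\<dots> = R i" by (rule R_fix[OF i])
  finally have "Mx i i * (eps i * (\<Sum>j=1..n. Ak A k i j * R j)) = Mx i i * R i" by simp
  then show ?thesis using Mx_diag[OF i] by (simp add: mult.assoc[symmetric])
qed

lemma claim2:
  assumes i: "i \<in> {1..n}"
  shows "mvmul n (Ak A k) (\<lambda>i. adj n B i k) i = gm * adj n B i k - mvmul n (Dk A k) (\<lambda>i. adj n B i k) i"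
proof -
  have "mvmul n (Ak A k) (\<lambda>i. adj n B i k) i = (\<Sum>j=1..n. Ak A k i j * (lam * R j))"
    unfolding mvmul_def using vv_eq by (intro sum.cong) auto
  also have "\<dots> = lam * (\<Sum>j=1..n. Ak A k i j * R j)"
    by (simp add: sum_distrib_left ac_simps)
  also have "\<dots> = Mx i i * (lam * R i)" unfolding Ak_R[OF i] by (simp add: ac_simps)
  finally have l: "mvmul n (Ak A k) (\<lambda>i. adj n B i k) i = Mx i i * adj n B i k" using vv_eq[OF i] by simp
  have "mvmul n (Dk A k) (\<lambda>i. adj n B i k) i = Dk A k i i * adj n B i k"
    unfolding mvmul_def by (rule sum_single[OF i]) (simp add: Dk_def)
  then have "gm * adj n B i k - mvmul n (Dk A k) (\<lambda>i. adj n B i k) i = (gm + - Dk A k i i) * adj n B i k"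
    unfolding minus_smax_def by (simp add: distrib_right uminus_mult_smax)
  also have "gm + - Dk A k i i = Mx i i" unfolding Mx_def idm_def minus_smax_def by simp
  finally show ?thesis using l by simp
qed

lemma A_split: "A i j = Dk A k i j + Ak A k i j"
  unfolding Dk_def Ak_def by auto

lemma claim3a:
  assumes sv: "\<forall>i\<in>{1..n}. signed (adj n B i k)"
  shows "eigvec n A gm (\<lambda>i. adj n B i k)"
  unfolding eigvec_def
proof (intro conjI ballI bexI)
  show "adj n B k k \<noteq> 0" using vv_eq[OF kin] R_k lam_nz by simp
  show "k \<in> {1..n}" by (rule kin)
  fix i assume i: "i \<in> {1..n}"
  show "signed (adj n B i k)" using sv i by blast
  let ?v = "\<lambda>i. adj n B i k"
  define D where "D = mvmul n (Dk A k) ?v i"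
  have "mvmul n A ?v i = D + mvmul n (Ak A k) ?v i"
    unfolding D_def mvmul_def by (subst A_split) (simp add: distrib_right sum.distrib)
  also have "\<dots> = D + (gm * ?v i + - D)" using claim2[OF i] unfolding D_def minus_smax_def by simp
  finally have "mvmul n A ?v i - gm * ?v i = (D + - D) + (gm * ?v i + - (gm * ?v i))"
    unfolding minus_smax_def by (simp add: ac_simps)
  then show "mvmul n A ?v i \<nabla> gm * ?v i" unfolding nabla_def by (simp add: bal_add bal_neg)
qed

lemma eig_rel:
  assumes w: "eigvec n A gm w" and i: "i \<in> {1..n}" "i \<noteq> k"
  shows "w i \<nabla> (\<Sum>j\<in>{1..n}-{i}. M i j * w j)"
proof -
  define Y where "Y = (\<Sum>j\<in>{1..n}-{i}. A i j * w j)"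
  have mv: "mvmul n A w i = A i i * w i + Y"
    unfolding mvmul_def Y_def using sum.remove[of "{1..n}" i "\<lambda>j. A i j * w j"] i by simp
  have "balanced (mvmul n A w i + - (gm * w i))"
    using w i unfolding eigvec_def nabla_def minus_smax_def by blast
  then have bal: "balanced (A i i * w i + Y + - (gm * w i))" unfolding mv .
  have eb: "eps i * B i i = 1" using B_diag[OF i] by simp
  have Bii: "B i i = gm + - A i i" unfolding B_def idm_def minus_smax_def by simp
  have "(- eps i) * (A i i * w i + Y + - (gm * w i))
        = (eps i * (gm * w i) + - (eps i * (A i i * w i))) + - (eps i * Y)"
    by (simp add: distrib_left uminus_mult_smax[symmetric] uminus_mult_smax2[symmetric] ac_simps)
  also have "eps i * (gm * w i) + - (eps i * (A i i * w i)) = (eps i * B i i) * w i"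
    unfolding Bii by (simp add: distrib_left distrib_right uminus_mult_smax2[symmetric] uminus_mult_smax[symmetric] ac_simps)
  also have "\<dots> = w i" using eb by simp
  finally have "balanced (w i + - (eps i * Y))" using bal_mult[OF bal, of "- eps i"] by simp
  moreover have "eps i * Y = (\<Sum>j\<in>{1..n}-{i}. M i j * w j)"
    unfolding Y_def M_def Ak_def by (simp add: sum_distrib_left mult.assoc)
  ultimately show ?thesis unfolding nabla_def minus_smax_def by simp
qed

lemma claim3b:
  assumes sv: "\<forall>i\<in>{1..n}. signed (adj n B i k)" and w: "eigvec n A gm w"
  shows "\<exists>c. \<forall>i\<in>{1..n}. w i = c * adj n B i k"
proof -
  have sR: "\<forall>i\<in>{1..n}. signed (R i)" using R_signed sv vv_eq by simp
  have sw: "\<forall>i\<in>{1..n}. signed (w i)" using w unfolding eigvec_def by blast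
  define y where "y = (\<lambda>j. w k * R j)"
  have sy: "\<forall>i\<in>{1..n}. signed (y i)" unfolding y_def using sR sw kin signed_mult by blast
  have yk: "w k = y k" unfolding y_def R_k by simp
  have rx: "\<forall>i\<in>{1..n}-{k}. w i \<nabla> (\<Sum>j\<in>{1..n}-{i}. M i j * w j)" using eig_rel[OF w] by blast
  have ry: "\<forall>i\<in>{1..n}-{k}. y i = (\<Sum>j\<in>{1..n}-{i}. M i j * y j)"
  proof
    fix i assume "i \<in> {1..n}-{k}"
    then have "R i = (\<Sum>j\<in>{1..n}-{i}. M i j * R j)" using R_offdiag by blast
    then show "y i = (\<Sum>j\<in>{1..n}-{i}. M i j * y j)" unfolding y_def by (simp add: sum_distrib_left ac_simps)
  qed
  have eq: "\<forall>i\<in>{1..n}. w i = y i" by (rule compare[OF sw sy yk rx ry])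
  obtain li where li: "li * lam = 1" using signed_inv lam_nz by blast
  have "\<forall>i\<in>{1..n}. w i = (w k * li) * adj n B i k"
  proof
    fix i assume i: "i \<in> {1..n}"
    have "(w k * li) * adj n B i k = w k * (li * lam) * R i" using vv_eq[OF i] by (simp add: ac_simps)
    then show "w i = (w k * li) * adj n B i k" using eq i li unfolding y_def by simp
  qed
  then show ?thesis by blast
qed

end

theorem theorem5p21:
  fixes A :: "'g::linordered_ab_group_add smat" and n k :: nat
  assumes "divisible_group TYPE('g)"
    and "TPD n A"
    and "\<forall>i. 1 \<le> i \<and> i < n \<longrightarrow> A (Suc i) (Suc i) \<preceq> A i i"
    and "k \<in> {1..n}"
    and "simple_eig n A k"
  shows "let \<gamma> = A k k;
             B = (\<lambda>i j. \<gamma> * idm i j - A i j);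
             v = (\<lambda>i. adj n B i k);
             lam = (- 1) ^ (k - 1) * (\<Prod>i=1..k-1. A i i) * \<gamma> ^ (n - k);
             E = mat_inv n (\<lambda>i j. \<gamma> * idm i j - Dk A k i j)
         in (\<forall>i\<in>{1..n}. v i = lam * kstar n (mmul n E (Ak A k)) i k)
          \<and> (\<forall>i\<in>{1..n}. mvmul n (Ak A k) v i = \<gamma> * v i - mvmul n (Dk A k) v i)
          \<and> ((\<forall>i\<in>{1..n}. signed (v i)) \<longrightarrow>
               eigvec n A \<gamma> v \<and> (\<forall>w. eigvec n A \<gamma> w \<longrightarrow> (\<exists>c. \<forall>i\<in>{1..n}. w i = c * v i)))"
proof -
  interpret tp n A k using assms(2-5) by unfold_locales
  have eB: "(\<lambda>i j. A k k * idm i j - A i j) = B" unfolding B_def gm_def ..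
  have eE: "(\<lambda>i j. A k k * idm i j - Dk A k i j) = Mx" unfolding Mx_def gm_def ..
  have eL: "(- 1) ^ (k - 1) * (\<Prod>i=1..k-1. A i i) * A k k ^ (n - k) = lam"
    using lam_eq unfolding gm_def by simp
  have eg: "A k k = gm" unfolding gm_def ..
  show ?thesis
    unfolding Let_def eB eE eL
    unfolding eg
    using claim1 claim2 claim3a claim3b by blast
qed


end
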